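(* For $n\ge1$, \[R_n^{D,<}(x)=\sum_{k=1}^{\lceil (n+1)/2\rceil}\bar d_{n,k}\,x^k(1+x)^{n-k},\] where $\bar d_{n,k}=\#\{\pi\in\overline{\mathcal S}_n:\mathrm{leaf}(T_\pi)=k,\ |\mathrm{Negs}(\pi)|\text{ even}\}$. Consequently $R_n^{D}(x)=\sum_{k=1}^{\lceil (n+1)/2\rceil}(\widehat d_{n,k}+\bar d_{n,k})\,x^k(1+x)^{n-k}$, with $\widehat d_{n,k}=\#\{\pi\in\mathcal S_n:\mathrm{leaf}(T_\pi)=k,\ |\mathrm{Negs}(\pi)|\text{ even}\}$.
   Context: $\mathfrak B_n$ is the set of signed permutations $\pi=\pi_1\cdots\pi_n$ (words over $\{\pm1,\dots,\pm n\}$ with $|\pi_1|,\dots,|\pi_n|$ a permutation of $[n]$), compared as integers; set $\pi_0=0$. $\mathrm{Negs}(\pi)$ is the set of negative entries of $\pi$, and $\mathfrak D_n=\{\pi\in\mathfrak B_n:|\mathrm{Negs}(\pi)|\text{ even}\}$. $\mathrm{run}_B(\pi)$ is $1$ plus the number of $i\in\{1,\dots,n-1\}$ with $\pi_{i-1}<\pi_i>\pi_{i+1}$ or $\pi_{i-1}>\pi_i<\pi_{i+1}$; $R_n^{D}(x)=\sum_{\pi\in\mathfrak D_n}x^{\mathrm{run}_B(\pi)}$ and $R_n^{D,<}(x)$ is the same sum restricted to $\pi_1<0$. Snakes: $\mathcal S_n=\{\pi\in\mathfrak B_n:0<\pi_1>\pi_2<\pi_3>\cdots\}$, and $\overline{\mathcal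 S}_n=\{-\pi:\pi\in\mathcal S_n\}=\{\pi\in\mathfrak B_n:0>\pi_1<\pi_2>\pi_3<\cdots\}$, where $-\pi$ changes the sign of every entry. Trees are rooted binary trees with each child designated left or right. A min–max tree is labeled bijectively by a totally ordered set so that each node's label is the minimum or maximum of its subtree's labels. A node with a child is inner; an inner node is a min-node (resp. max-node) if its label is the minimum (resp. maximum) of its subtree. An HR-tree is a min–max tree in which every inner node $s$ has a nonempty right subtree containing the maximum label of the subtree of $s$ if $s$ is a min-node, the minimum if $s$ is a max-node. $T_\pi$ is the unique HR-tree with label set $\{0,\pi_1,\dots,\pi_n\}$ whose in-order reading word ($w(T)=w(L)\,\ell_{\mathrm{root}}\,w(R)$) is $0\pi_1\cdots\pi_n$; $\mathrm{leaf}(T)$ is its number of leaves. *)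

theory Defs
  imports Complex_Main
begin

definition signed_perms :: "nat \<Rightarrow> int list set" where
  "signed_perms n = {p. length p = n \<and> distinct (map abs p) \<and> set (map abs p) = {1..int n}}"

definition Negs :: "int list \<Rightarrow> int set" where
  "Negs p = {x \<in> set p. x < 0}"

definition typeD_perms :: "nat \<Rightarrow> int list set" where
  "typeD_perms n = {p \<in> signed_perms n. even (card (Negs p))}"

(* run_B, with pi_0 = 0: the word w = 0 # pi, so w ! i = pi_i *)
definition runB :: "int list \<Rightarrow> nat" where
  "runB p = (let w = 0 # p in
     1 + card {i \<in> {1..length p - 1}.
            (w ! (i - 1) < w ! i \<and> w ! i > w ! (i + 1)) \<or>
            (w ! (i - 1) > w ! i \<and> w ! i < w ! (i + 1))})"

definition RD :: "nat \<Rightarrow> real \<Rightarrow> real" where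
  "RD n x = (\<Sum>p\<in>typeD_perms n. x ^ runB p)"

definition RD_neg :: "nat \<Rightarrow> real \<Rightarrow> real" where
  "RD_neg n x = (\<Sum>p\<in>{p \<in> typeD_perms n. hd p < 0}. x ^ runB p)"

definition snakes :: "nat \<Rightarrow> int list set" where
  "snakes n = {p \<in> signed_perms n. \<forall>i<n. let w = 0 # p in
      (if even i then w ! i < w ! (i + 1) else w ! i > w ! (i + 1))}"

definition snakes_bar :: "nat \<Rightarrow> int list set" where
  "snakes_bar n = (map uminus) ` snakes n"

datatype 'a btree = Tip | Nd "'a btree" 'a "'a btree"

fun labels :: "'a btree \<Rightarrow> 'a set" where
  "labels Tip = {}"
| "labels (Nd l a r) = labels l \<union> {a} \<union> labels r"

fun inord :: "'a btree \<Rightarrow> 'a list" where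
  "inord Tip = []"
| "inord (Nd l a r) = inord l @ [a] @ inord r"

fun leaf :: "'a btree \<Rightarrow> nat" where
  "leaf Tip = 0"
| "leaf (Nd l a r) = (if l = Tip \<and> r = Tip then 1 else leaf l + leaf r)"

fun hr_cond :: "'a::linorder btree \<Rightarrow> bool" where
  "hr_cond Tip = True"
| "hr_cond (Nd l a r) =
    (let S = labels (Nd l a r) in
      hr_cond l \<and> hr_cond r \<and> (a = Min S \<or> a = Max S) \<and>
      ((l \<noteq> Tip \<or> r \<noteq> Tip) \<longrightarrow>
         r \<noteq> Tip \<and> (a = Min S \<longrightarrow> Max S \<in> labels r)
                    \<and> (a = Max S \<longrightarrow> Min S \<in> labels r)))"

definition HR_tree :: "'a::linorder btree \<Rightarrow> bool" where
  "HR_tree t \<longleftrightarrow> t \<noteq> Tip \<and> distinct (inord t) \<and> hr_cond t"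

definition T_of :: "int list \<Rightarrow> int btree" where
  "T_of p = (THE t. HR_tree t \<and> inord t = 0 # p)"

definition dbar :: "nat \<Rightarrow> nat \<Rightarrow> nat" where
  "dbar n k = card {p \<in> snakes_bar n. leaf (T_of p) = k \<and> even (card (Negs p))}"

definition dhat :: "nat \<Rightarrow> nat \<Rightarrow> nat" where
  "dhat n k = card {p \<in> snakes n. leaf (T_of p) = k \<and> even (card (Negs p))}"

end

theory Submission
  imports Defs "HOL-Combinatorics.Multiset_Permutations"
begin


definition turn :: "int \<Rightarrow> int \<Rightarrow> int \<Rightarrow> bool" where
  "turn a b c \<longleftrightarrow> (a < b \<and> b > c) \<or> (a > b \<and> b < c)"

fun tp :: "int list \<Rightarrow> nat" where
  "tp (a # b # c # r) = (if turn a b c then 1 else 0) + tp (b # c # r)"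
| "tp _ = 0"

lemma tp_le: "tp w + 2 \<le> length w \<or> tp w = 0"
  by (induction w rule: tp.induct) auto

lemma tp_le2: "length w \<ge> 2 \<Longrightarrow> tp w + 2 \<le> length w"
  using tp_le[of w] by auto

lemma tp_append:
  "tp (xs @ b # ys) = tp (xs @ [b]) +
     (if xs \<noteq> [] \<and> ys \<noteq> [] \<and> turn (last xs) b (hd ys) then 1 else 0) + tp (b # ys)"
proof (induction xs rule: induct_list012)
  case 1 then show ?case by simp
next
  case (2 a) then show ?case by (cases ys) auto
next
  case (3 a a' xs)
  have h: "hd (xs @ b # ys) = hd (xs @ [b])" by (cases xs) auto
  obtain c r where cr: "xs @ b # ys = c # r" by (cases "xs @ b # ys") auto
  obtain c' r' where cr': "xs @ [b] = c' # r'" by (cases "xs @ [b]") auto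
  have "c = c'" using h cr cr' by simp
  then show ?case using 3(2) cr cr' by (simp add: h)
qed

lemma tp_snoc2:
  "ys \<noteq> [] \<Longrightarrow> tp (ys @ [c, e]) = tp (ys @ [c]) + (if turn (last ys) c e then 1 else 0)"
  using tp_append[of ys c "[e]"] by simp

lemma tp_map_mono:
  "(\<forall>x\<in>set w. \<forall>y\<in>set w. x < y \<longrightarrow> g x < g y) \<Longrightarrow> tp (map g w) = tp w"
proof (induction w rule: tp.induct)
  case (1 a b c r)
  have "turn (g a) (g b) (g c) = turn a b c"
    using 1(2) unfolding turn_def by simp (metis linorder_neqE_linordered_idom not_less_iff_gr_or_eq)
  then show ?case using 1 by simp
qed auto

lemma tp_map_anti:
  "(\<forall>x\<in>set w. \<forall>y\<in>set w. x < y \<longrightarrow> g x > g y) \<Longrightarrow> tp (map g w) = tp w"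
proof (induction w rule: tp.induct)
  case (1 a b c r)
  have "turn (g a) (g b) (g c) = turn a b c"
    using 1(2) unfolding turn_def by simp (metis linorder_neqE_linordered_idom not_less_iff_gr_or_eq)
  then show ?case using 1 by simp
qed auto

lemma tp_uminus: "tp (map uminus w) = tp w"
  by (rule tp_map_anti) auto


definition isext :: "int list \<Rightarrow> int \<Rightarrow> bool" where
  "isext w y \<longleftrightarrow> y = Min (set w) \<or> y = Max (set w)"

lemma isext_iff: "w \<noteq> [] \<Longrightarrow> isext w y \<longleftrightarrow> y \<in> set w \<and> ((\<forall>z\<in>set w. y \<le> z) \<or> (\<forall>z\<in>set w. z \<le> y))"
  unfolding isext_def
  by (metis List.finite_set Max_ge Max_in Min_in Min_le antisym set_empty)

lemma takeWhile_less: "\<exists>x\<in>set xs. \<not> P x \<Longrightarrow> length (takeWhile P xs) < length xs"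
  by (induction xs) auto

lemma isext_exists: "w \<noteq> [] \<Longrightarrow> \<exists>y\<in>set w. isext w y"
  unfolding isext_def using Min_in[of "set w"] by auto

function mk :: "int list \<Rightarrow> int btree" where
  "mk [] = Tip"
| "mk (x # xs) = Nd (mk (takeWhile (\<lambda>y. \<not> isext (x # xs) y) (x # xs)))
                    (hd (dropWhile (\<lambda>y. \<not> isext (x # xs) y) (x # xs)))
                    (mk (tl (dropWhile (\<lambda>y. \<not> isext (x # xs) y) (x # xs))))"
  by pat_completeness auto
termination
proof (relation "measure length")
  fix x :: int and xs
  show "(takeWhile (\<lambda>y. \<not> isext (x # xs) y) (x # xs), x # xs) \<in> measure length"
    using takeWhile_less[where P="\<lambda>y. \<not> isext (x # xs) y" and xs="x # xs"] isext_exists[of "x#xs"] by auto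
  show "(tl (dropWhile (\<lambda>y. \<not> isext (x # xs) y) (x # xs)), x # xs) \<in> measure length"
    using length_dropWhile_le[of "\<lambda>y. \<not> isext (x # xs) y" xs] by auto
qed auto

lemma mk_split:
  assumes "isext (P @ e # S) e" "\<forall>y\<in>set P. \<not> isext (P @ e # S) y"
  shows "mk (P @ e # S) = Nd (mk P) e (mk S)"
proof -
  obtain x xs where xxs: "P @ e # S = x # xs" by (cases P) auto
  have tw: "takeWhile (\<lambda>y. \<not> isext (P @ e # S) y) (P @ e # S) = P"
    using assms by (simp add: takeWhile_append2)
  have dw: "dropWhile (\<lambda>y. \<not> isext (P @ e # S) y) (P @ e # S) = e # S"
    using assms by (simp add: dropWhile_append2)
  show ?thesis using tw dw unfolding xxs by simp
qed

declare mk.simps(2)[simp del]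

lemma mk_Tip_iff: "mk w = Tip \<longleftrightarrow> w = []"
  by (cases w) (auto simp: mk.simps)

lemma set_inord: "set (inord t) = labels t"
  by (induction t) auto


lemma mk_correct: "distinct w \<Longrightarrow> hr_cond (mk w) \<and> inord (mk w) = w"
proof (induction w rule: mk.induct)
  case 1 then show ?case by simp
next
  case (2 x xs)
  define w where "w = x # xs"
  define Q where "Q = (\<lambda>y. \<not> isext w y)"
  define P where "P = takeWhile Q w"
  define R where "R = dropWhile Q w"
  have wPR: "w = P @ R" unfolding P_def R_def by simp
  have Rne: "R \<noteq> []" unfolding R_def Q_def using isext_exists[of w] w_def
    by (auto simp: dropWhile_eq_Nil_conv)
  define e where "e = hd R"
  define S where "S = tl R"
  have R: "R = e # S" using Rne e_def S_def by simp
  have ext: "isext w e" unfolding e_def R_def Q_def using Rne hd_dropWhile R_def Q_def by metis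
  have Pne: "\<forall>y\<in>set P. \<not> isext w y" unfolding P_def Q_def by (auto dest: set_takeWhileD)
  have dw: "distinct w" using 2(3) w_def by simp
  have w: "w = P @ e # S" using wPR R by simp
  have dP: "distinct P" "distinct S" using dw w by auto
  have IH1: "hr_cond (mk P) \<and> inord (mk P) = P"
    using 2(1) dP(1) unfolding P_def Q_def w_def by blast
  have IH2: "hr_cond (mk S) \<and> inord (mk S) = S"
    using 2(2) dP(2) unfolding S_def R_def Q_def w_def by blast
  have mkw: "mk w = Nd (mk P) e (mk S)" using mk_split[of P e S] ext Pne w by simp
  have lab: "labels (mk w) = set w" using mkw IH1 IH2 w by (simp flip: set_inord)
  have emm: "e = Min (set w) \<or> e = Max (set w)" using ext isext_def by auto
  have inner: "S \<noteq> [] \<and> (e = Min (set w) \<longrightarrow> Max (set w) \<in> set S) \<and> (e = Max (set w) \<longrightarrow> Min (set w) \<in> set S)"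
    if "P \<noteq> [] \<or> S \<noteq> []"
  proof -
    have "length w \<ge> 2" using that w by (cases P; cases S) auto
    then have c2: "card (set w) \<ge> 2" using dw distinct_card[of w] by simp
    have fin: "finite (set w)" by simp
    have ne: "set w \<noteq> {}" using w by auto
    have mM: "Min (set w) \<noteq> Max (set w)"
    proof
      assume "Min (set w) = Max (set w)"
      then have "\<forall>z\<in>set w. z = Min (set w)" using fin by (metis Max_ge Min_le antisym)
      then have "set w \<subseteq> {Min (set w)}" by auto
      then have "card (set w) \<le> card {Min (set w)}" by (intro card_mono) auto
      then have "card (set w) \<le> 1" by simp
      then show False using c2 by simp
    qed
    have inM: "Max (set w) \<in> set w" "Min (set w) \<in> set w" using fin ne by auto
    have notP: "Max (set w) \<notin> set P" "Min (set w) \<notin> set P" using Pne isext_def by auto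
    have A: "e = Min (set w) \<longrightarrow> Max (set w) \<in> set S" using inM notP mM w by auto
    have B: "e = Max (set w) \<longrightarrow> Min (set w) \<in> set S" using inM notP mM w by auto
    have "S \<noteq> []" using A B emm by auto
    then show ?thesis using A B by auto
  qed
  have L: "labels (Nd (mk P) e (mk S)) = set w" using lab mkw by simp
  have LS: "labels (mk S) = set S" using IH2 set_inord by metis
  have "hr_cond (Nd (mk P) e (mk S))"
  proof -
    have I2: "mk P \<noteq> Tip \<or> mk S \<noteq> Tip \<longrightarrow> mk S \<noteq> Tip \<and> (e = Min (set w) \<longrightarrow> Max (set w) \<in> set S) \<and> (e = Max (set w) \<longrightarrow> Min (set w) \<in> set S)"
      using inner unfolding mk_Tip_iff by blast
    show ?thesis unfolding hr_cond.simps Let_def L LS using IH1 IH2 emm I2 by blast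
  qed
  then have "hr_cond (mk w)" using mkw by simp
  moreover have "inord (mk w) = w" using mkw IH1 IH2 w by simp
  ultimately show ?case unfolding w_def[symmetric] by blast
qed


lemma mk_inord: "hr_cond t \<Longrightarrow> distinct (inord t) \<Longrightarrow> mk (inord t) = t"
proof (induction t)
  case Tip then show ?case by simp
next
  case (Nd l a r)
  define w where "w = inord (Nd l a r)"
  have w: "w = inord l @ a # inord r" unfolding w_def by simp
  have sw: "set w = labels (Nd l a r)" unfolding w_def by (simp add: set_inord)
  have hl: "hr_cond l" "hr_cond r" using Nd(3) by (auto simp: Let_def)
  have dl: "distinct (inord l)" "distinct (inord r)" using Nd(4) by auto
  have am: "a = Min (set w) \<or> a = Max (set w)" using Nd(3) sw by (simp add: Let_def)
  have ext: "isext w a" using am isext_def by auto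
  have notext: "\<forall>y\<in>set (inord l). \<not> isext w y"
  proof
    fix y assume y: "y \<in> set (inord l)"
    then have lnt: "l \<noteq> Tip" by auto
    have cond: "(a = Min (set w) \<longrightarrow> Max (set w) \<in> labels r) \<and> (a = Max (set w) \<longrightarrow> Min (set w) \<in> labels r)"
      using Nd(3) lnt sw by (simp add: Let_def)
    have ya: "y \<noteq> a" using Nd(4) y by auto
    have yr: "y \<notin> labels r" using Nd(4) y by (auto simp flip: set_inord)
    show "\<not> isext w y" using am cond ya yr unfolding isext_def by auto
  qed
  have "mk w = Nd (mk (inord l)) a (mk (inord r))"
    using mk_split[of "inord l" a "inord r"] ext notext w by simp
  then show ?case using Nd hl dl w_def by simp
qed

lemma T_of_mk: "distinct (0 # p) \<Longrightarrow> T_of p = mk (0 # p)"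
  unfolding T_of_def
proof (rule the_equality)
  assume d: "distinct (0 # p)"
  show "HR_tree (mk (0 # p)) \<and> inord (mk (0 # p)) = 0 # p"
    using mk_correct[OF d] d unfolding HR_tree_def by (simp add: mk_Tip_iff)
  fix t assume "HR_tree t \<and> inord t = 0 # p"
  then show "t = mk (0 # p)" using mk_inord[of t] unfolding HR_tree_def by metis
qed


definition lf :: "int list \<Rightarrow> nat" where "lf w = leaf (mk w)"

lemma lf_Nil[simp]: "lf [] = 0" unfolding lf_def by (simp add: mk.simps)

lemma lf_split:
  assumes "isext (P @ e # S) e" "\<forall>y\<in>set P. \<not> isext (P @ e # S) y"
  shows "lf (P @ e # S) = (if P = [] \<and> S = [] then 1 else lf P + lf S)"
  unfolding lf_def mk_split[OF assms] by (simp add: mk_Tip_iff)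

lemma decomp_exists:
  assumes "w \<noteq> []"
  shows "\<exists>P e S. w = P @ e # S \<and> isext w e \<and> (\<forall>y\<in>set P. \<not> isext w y)"
proof -
  define Q where "Q = (\<lambda>y. \<not> isext w y)"
  define P where "P = takeWhile Q w"
  define R where "R = dropWhile Q w"
  have wPR: "w = P @ R" unfolding P_def R_def by simp
  have Rne: "R \<noteq> []" unfolding R_def Q_def using isext_exists[OF assms]
    by (auto simp: dropWhile_eq_Nil_conv)
  define e where "e = hd R"
  define S where "S = tl R"
  have R: "R = e # S" using Rne e_def S_def by simp
  have ext: "isext w e" unfolding e_def R_def Q_def using Rne hd_dropWhile R_def Q_def by metis
  have Pne: "\<forall>y\<in>set P. \<not> isext w y" unfolding P_def Q_def by (auto dest: set_takeWhileD)
  show ?thesis using wPR R ext Pne by blast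
qed

lemma isext_uminus: "w \<noteq> [] \<Longrightarrow> isext (map uminus w) (- y) \<longleftrightarrow> isext w y"
  by (simp add: isext_iff) (auto simp: image_iff)

lemma lf_uminus: "lf (map uminus w) = lf w"
proof (induction "length w" arbitrary: w rule: less_induct)
  case less
  show ?case
  proof (cases "w = []")
    case True then show ?thesis by simp
  next
    case False
    then obtain P e S where d: "w = P @ e # S" "isext w e" "\<forall>y\<in>set P. \<not> isext w y"
      using decomp_exists by blast
    have mw: "map uminus w = map uminus P @ (- e) # map uminus S" using d by simp
    have e1: "isext (map uminus P @ (- e) # map uminus S) (- e)"
      using isext_uminus[OF False] d mw by simp
    have e2: "\<forall>y\<in>set (map uminus P). \<not> isext (map uminus P @ (- e) # map uminus S) y"
      using isext_uminus[OF False] d mw by auto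
    have "lf (map uminus w) = (if P = [] \<and> S = [] then 1 else lf (map uminus P) + lf (map uminus S))"
      using lf_split[OF e1 e2] mw by simp
    also have "\<dots> = (if P = [] \<and> S = [] then 1 else lf P + lf S)"
      using less d by simp
    also have "\<dots> = lf w" using lf_split[of P e S] d by simp
    finally show ?thesis .
  qed
qed

lemma leaf_pos: "t \<noteq> Tip \<Longrightarrow> leaf t \<ge> 1"
  by (induction t) auto

lemma leaf_bound: "2 * leaf t \<le> length (inord t) + 1"
  by (induction t) auto

lemma lf_bounds: "distinct w \<Longrightarrow> w \<noteq> [] \<Longrightarrow> 1 \<le> lf w \<and> 2 * lf w \<le> length w + 1"
  using mk_correct[of w] leaf_pos[of "mk w"] leaf_bound[of "mk w"] unfolding lf_def
  by (simp add: mk_Tip_iff)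


abbreviation perms :: "int set \<Rightarrow> int list set" where "perms \<equiv> permutations_of_set"

lemma perm_cons_sum:
  fixes f :: "int list \<Rightarrow> real"
  assumes "finite A" "A \<noteq> {}"
  shows "(\<Sum>u\<in>perms A. f u) = (\<Sum>b\<in>A. \<Sum>u\<in>perms (A - {b}). f (b # u))"
proof -
  have "(\<Sum>u\<in>perms A. f u) = (\<Sum>b\<in>A. \<Sum>u\<in>(\<lambda>xs. b # xs) ` perms (A - {b}). f u)"
    unfolding permutations_of_set_nonempty[OF assms(2)]
    by (rule sum.UNION_disjoint) (auto simp: assms(1))
  also have "\<dots> = (\<Sum>b\<in>A. \<Sum>u\<in>perms (A - {b}). f (b # u))"
    by (rule sum.cong[OF refl], subst sum.reindex) (auto simp: inj_on_def)
  finally show ?thesis .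
qed

lemma perm_map_sum:
  fixes f :: "int list \<Rightarrow> real"
  assumes "bij_betw g A B"
  shows "(\<Sum>u\<in>perms B. f u) = (\<Sum>u\<in>perms A. f (map g u))"
proof -
  have B: "B = g ` A" and inj: "inj_on g A" using assms by (auto simp: bij_betw_def)
  have inj2: "inj_on (map g) (perms A)"
    by (rule inj_on_subset[OF inj_on_map_lists[OF inj]]) (auto dest: permutations_of_setD)
  show ?thesis unfolding B permutations_of_set_image_inj[OF inj]
    by (subst sum.reindex[OF inj2]) simp
qed

lemma ord_iso:
  fixes A B :: "int set"
  shows "finite A \<Longrightarrow> finite B \<Longrightarrow> card A = card B \<Longrightarrow>
    \<exists>g. bij_betw g A B \<and> (\<forall>x\<in>A. \<forall>y\<in>A. x < y \<longrightarrow> g x < g y)"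
proof (induction "card A" arbitrary: A B)
  case 0
  then have "A = {}" "B = {}" by auto
  then show ?case by (auto simp: bij_betw_def)
next
  case (Suc n)
  then have ne: "A \<noteq> {}" "B \<noteq> {}" by auto
  define a where "a = Max A"
  define b where "b = Max B"
  have aA: "a \<in> A" "b \<in> B" using ne Suc(3,4) a_def b_def by auto
  have c: "n = card (A - {a})" "card (A - {a}) = card (B - {b})" using Suc aA by auto
  obtain g where g: "bij_betw g (A - {a}) (B - {b})" "\<forall>x\<in>A - {a}. \<forall>y\<in>A - {a}. x < y \<longrightarrow> g x < g y"
    using Suc(1)[of "A - {a}" "B - {b}"] c Suc(3,4) by auto
  define h where "h = g(a := b)"
  have hb: "bij_betw h (A - {a}) (B - {b})" using g(1) unfolding h_def
    by (rule bij_betw_cong[THEN iffD1, rotated]) auto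
  have "bij_betw h ((A - {a}) \<union> {a}) ((B - {b}) \<union> {h a})"
    by (rule notIn_Un_bij_betw[OF _ _ hb]) (auto simp: h_def)
  moreover have "(A - {a}) \<union> {a} = A" "(B - {b}) \<union> {h a} = B" using aA by (auto simp: h_def)
  ultimately have bh: "bij_betw h A B" by simp
  have "\<forall>x\<in>A. \<forall>y\<in>A. x < y \<longrightarrow> h x < h y"
  proof (intro ballI impI)
    fix x y assume xy: "x \<in> A" "y \<in> A" "x < y"
    have xa: "x \<noteq> a" using xy a_def Suc(3) by (metis Max_ge not_le)
    show "h x < h y"
    proof (cases "y = a")
      case True
      have "g x \<in> B - {b}" using g(1) xy xa by (auto simp: bij_betw_def)
      then have "g x < b" using b_def Suc(4) by (metis DiffE Max_ge insertI1 order_le_less)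
      then show ?thesis using True xa by (simp add: h_def)
    next
      case False
      then show ?thesis using g(2) xy xa by (simp add: h_def)
    qed
  qed
  then show ?case using bh by blast
qed

lemma rev_iso:
  fixes W :: "int set"
  assumes "finite W"
  shows "\<exists>\<rho>. bij_betw \<rho> W W \<and> (\<forall>x\<in>W. \<forall>y\<in>W. x < y \<longrightarrow> \<rho> y < \<rho> x)"
proof -
  have "card (uminus ` W) = card W" by (simp add: card_image)
  then obtain g where g: "bij_betw g (uminus ` W) W" "\<forall>x\<in>uminus ` W. \<forall>y\<in>uminus ` W. x < y \<longrightarrow> g x < g y"
    using ord_iso[of "uminus ` W" W] assms by auto
  have "bij_betw uminus W (uminus ` W)" by (simp add: bij_betw_def)
  then have "bij_betw (g \<circ> uminus) W W" using g(1) by (rule bij_betw_trans)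
  moreover have "\<forall>x\<in>W. \<forall>y\<in>W. x < y \<longrightarrow> (g \<circ> uminus) y < (g \<circ> uminus) x"
    using g(2) by auto
  ultimately show ?thesis by blast
qed


lemma perm_split_sum:
  fixes f :: "int list \<Rightarrow> real"
  assumes fin: "finite U" and E: "E \<subseteq> U" "E \<noteq> {}"
  shows "(\<Sum>u\<in>perms U. f u) =
    (\<Sum>e\<in>E. \<Sum>X\<in>Pow (U - E). \<Sum>P\<in>perms X. \<Sum>S\<in>perms (U - X - {e}). f (P @ e # S))"
proof -
  have finE: "finite E" using fin E finite_subset by blast
  define I where "I = Sigma E (\<lambda>e. Sigma (Pow (U - E)) (\<lambda>X. perms X \<times> perms (U - X - {e})))"
  have "(\<Sum>e\<in>E. \<Sum>X\<in>Pow (U - E). \<Sum>P\<in>perms X. \<Sum>S\<in>perms (U - X - {e}). f (P @ e # S))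
      = (\<Sum>e\<in>E. \<Sum>X\<in>Pow (U - E). \<Sum>(P, S)\<in>perms X \<times> perms (U - X - {e}). f (P @ e # S))"
    by (simp add: sum.cartesian_product)
  also have "\<dots> = (\<Sum>e\<in>E. \<Sum>(X, P, S)\<in>Sigma (Pow (U - E)) (\<lambda>X. perms X \<times> perms (U - X - {e})). f (P @ e # S))"
    by (rule sum.cong[OF refl], subst sum.Sigma) (auto simp: fin split_def)
  also have "\<dots> = (\<Sum>(e, X, P, S)\<in>I. f (P @ e # S))"
    unfolding I_def by (subst sum.Sigma) (auto simp: fin finE split_def)
  finally have R: "(\<Sum>e\<in>E. \<Sum>X\<in>Pow (U - E). \<Sum>P\<in>perms X. \<Sum>S\<in>perms (U - X - {e}). f (P @ e # S))
      = (\<Sum>(e, X, P, S)\<in>I. f (P @ e # S))" .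
  define Q where "Q = (\<lambda>y. y \<notin> E)"
  define j where "j = (\<lambda>u. (hd (dropWhile Q u), set (takeWhile Q u), takeWhile Q u, tl (dropWhile Q u)))"
  define i where "i = (\<lambda>(e::int, X::int set, P, S). P @ e # S)"
  have "(\<Sum>u\<in>perms U. f u) = (\<Sum>t\<in>I. (\<lambda>(e, X, P, S). f (P @ e # S)) t)"
  proof (rule sum.reindex_bij_witness[where i = i and j = j])
    fix u assume u: "u \<in> perms U"
    have su: "set u = U" "distinct u" using u by (auto dest: permutations_of_setD)
    have dne: "dropWhile Q u \<noteq> []" using su E unfolding Q_def by (auto simp: dropWhile_eq_Nil_conv)
    define P0 where "P0 = takeWhile Q u"
    define e0 where "e0 = hd (dropWhile Q u)"
    define S0 where "S0 = tl (dropWhile Q u)"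
    have ud: "u = P0 @ e0 # S0" using dne unfolding P0_def e0_def S0_def by simp
    have ju: "j u = (e0, set P0, P0, S0)" unfolding j_def P0_def e0_def S0_def by simp
    show "i (j u) = u" unfolding i_def ju using ud by simp
    then show "(\<lambda>(e, X, P, S). f (P @ e # S)) (j u) = f u" unfolding i_def ju by simp
    have eE: "e0 \<in> E" using hd_dropWhile[OF dne] Q_def e0_def by simp
    have tE: "set P0 \<subseteq> U - E" using su(1) unfolding Q_def P0_def
      by (auto dest: set_takeWhileD)
    have dd: "distinct (P0 @ e0 # S0)" using ud su(2) by simp
    have gen: "\<And>P e S. distinct (P @ e # S) \<Longrightarrow> set S = set (P @ e # S) - set P - {e}" by auto
    have st: "set S0 = U - set P0 - {e0}"
      using gen[OF dd] ud su(1) by metis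
    show "j u \<in> I" unfolding I_def ju using eE tE dd st
      by (auto intro!: permutations_of_setI)
  next
    fix t assume t: "t \<in> I"
    then obtain e X P S where tt: "t = (e, X, P, S)" "e \<in> E" "X \<subseteq> U - E" "P \<in> perms X"
      "S \<in> perms (U - X - {e})" unfolding I_def by auto
    have sP: "set P = X" "distinct P" "set S = U - X - {e}" "distinct S" using tt
      by (auto dest: permutations_of_setD)
    have tw: "takeWhile Q (P @ e # S) = P" using sP tt unfolding Q_def by (subst takeWhile_append2) auto
    have dw: "dropWhile Q (P @ e # S) = e # S" using sP tt unfolding Q_def by (subst dropWhile_append2) auto
    show "j (i t) = t" unfolding i_def j_def tt(1) using tw dw sP by simp
    show "i t \<in> perms U" unfolding i_def tt(1) using sP tt E by (auto intro!: permutations_of_setI)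
  qed
  then show ?thesis using R by simp
qed


definition D :: "real \<Rightarrow> int set \<Rightarrow> int \<Rightarrow> real" where
  "D x V a = (\<Sum>u\<in>perms (V - {a}). if u \<noteq> [] \<and> hd u < a then x ^ (1 + tp (a # u)) else 0)"

definition wt :: "real \<Rightarrow> int list \<Rightarrow> real" where
  "wt x S = x ^ lf S * (1 + x) ^ (length S - lf S)"

definition K :: "real \<Rightarrow> int set \<Rightarrow> int \<Rightarrow> real" where
  "K x V a = (\<Sum>u\<in>perms (V - {a}).
     if u \<noteq> [] \<and> hd u < a \<and> tp (a # u) + 1 = length u then x ^ lf (a # u) * (1 + x) ^ (length u - lf (a # u)) else 0)"

definition SA :: "real \<Rightarrow> int \<Rightarrow> int set \<Rightarrow> real" where
  "SA x e Y = (\<Sum>S\<in>perms Y. x ^ (1 + tp (e # S)))"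

definition SB :: "real \<Rightarrow> int \<Rightarrow> int set \<Rightarrow> real" where
  "SB x e Y = (\<Sum>S\<in>perms Y. if tp (e # S) + 1 = length S then wt x S else 0)"

lemma lf_single[simp]: "lf [b] = 1"
  using lf_split[of "[]" b "[]"] by (simp add: isext_def)

lemma lf_le_len: "distinct (b # u) \<Longrightarrow> u \<noteq> [] \<Longrightarrow> lf (b # u) \<le> length u"
  using lf_bounds[of "b # u"] by (cases u) auto

lemma sym_DU:
  assumes fin: "finite Y"
  shows "(\<Sum>b\<in>Y. \<Sum>u\<in>perms (Y - {b}). if u \<noteq> [] \<and> hd u > b then x ^ (1 + tp (b # u)) else 0)
       = (\<Sum>b\<in>Y. D x Y b)"
proof (cases "Y = {}")
  case True then show ?thesis by simp
next
  case False
  define gU where "gU = (\<lambda>S::int list. if length S \<ge> 2 \<and> S ! 0 < S ! 1 then x ^ (1 + tp S) else 0)"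
  define gD where "gD = (\<lambda>S::int list. if length S \<ge> 2 \<and> S ! 0 > S ! 1 then x ^ (1 + tp S) else 0)"
  have L: "(\<Sum>b\<in>Y. \<Sum>u\<in>perms (Y - {b}). if u \<noteq> [] \<and> hd u > b then x ^ (1 + tp (b # u)) else 0)
      = (\<Sum>S\<in>perms Y. gU S)"
    unfolding perm_cons_sum[OF fin False] gU_def
    by (intro sum.cong refl) (auto simp: hd_conv_nth Suc_le_eq)
  have R: "(\<Sum>b\<in>Y. D x Y b) = (\<Sum>S\<in>perms Y. gD S)"
    unfolding perm_cons_sum[OF fin False] gD_def D_def
    by (intro sum.cong refl) (auto simp: hd_conv_nth Suc_le_eq)
  obtain \<rho> where r: "bij_betw \<rho> Y Y" "\<forall>x\<in>Y. \<forall>y\<in>Y. x < y \<longrightarrow> \<rho> y < \<rho> x"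
    using rev_iso[OF fin] by blast
  have "(\<Sum>S\<in>perms Y. gD S) = (\<Sum>S\<in>perms Y. gD (map \<rho> S))"
    by (rule perm_map_sum[OF r(1)])
  also have "\<dots> = (\<Sum>S\<in>perms Y. gU S)"
  proof (rule sum.cong[OF refl])
    fix S assume S: "S \<in> perms Y"
    have sS: "set S = Y" "distinct S" using S by (auto dest: permutations_of_setD)
    have tpS: "tp (map \<rho> S) = tp S" by (rule tp_map_anti) (use r(2) sS in auto)
    show "gD (map \<rho> S) = gU S"
    proof (cases "length S \<ge> 2")
      case l: True
      have l01: "0 < length S" "1 < length S" using l by auto
      have in01: "S ! 0 \<in> Y" "S ! 1 \<in> Y" using nth_mem[OF l01(1)] nth_mem[OF l01(2)] sS(1) by blast+
      have ne: "S ! 0 \<noteq> S ! 1" using nth_eq_iff_index_eq[OF sS(2) l01(1) l01(2)] by simp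
      have c: "(\<rho> (S ! 0) > \<rho> (S ! 1)) = (S ! 0 < S ! 1)"
        using r(2) in01 ne by (metis linorder_neqE_linordered_idom order_less_asym)
      have m: "map \<rho> S ! 0 = \<rho> (S ! 0)" "map \<rho> S ! 1 = \<rho> (S ! 1)" using l01 by auto
      show ?thesis unfolding gD_def gU_def using tpS c m l by simp
    next
      case False
      then show ?thesis unfolding gD_def gU_def by simp
    qed
  qed
  finally show ?thesis using L R by simp
qed





lemma pointA:
  fixes x :: real
  assumes "e < b" "u \<noteq> []" "hd u \<noteq> b"
  shows "x ^ (1 + tp (e # b # u)) = x * (if u \<noteq> [] \<and> hd u < b then x ^ (1 + tp (b # u)) else 0)
          + (if u \<noteq> [] \<and> hd u > b then x ^ (1 + tp (b # u)) else 0)"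
proof -
  obtain c r where u: "u = c # r" using assms(2) by (cases u) auto
  have "c \<noteq> b" using assms(3) u by simp
  then show ?thesis using assms(1) unfolding u by (cases "c < b") (auto simp: turn_def)
qed

lemma pointB:
  fixes x :: real
  assumes "e < b" "u \<noteq> []" "distinct (b # u)"
  shows "(if tp (e # b # u) + 1 = length (b # u) then wt x (b # u) else 0)
      = (1 + x) * (if u \<noteq> [] \<and> hd u < b \<and> tp (b # u) + 1 = length u
                    then x ^ lf (b # u) * (1 + x) ^ (length u - lf (b # u)) else 0)"
proof -
  obtain c r where u: "u = c # r" using assms(2) by (cases u) auto
  have cb: "c \<noteq> b" using assms(3) u by auto
  have tl: "tp (b # c # r) + 2 \<le> length (b # c # r)" by (rule tp_le2) simp
  have lfl: "lf (b # u) \<le> length u" using lf_le_len[OF assms(3,2)] .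
  have w: "wt x (b # u) = (1 + x) * (x ^ lf (b # u) * (1 + x) ^ (length u - lf (b # u)))"
    unfolding wt_def using lfl by (simp add: Suc_diff_le)
  have tpe: "tp (e # b # u) = (if c < b then 1 else 0) + tp (b # u)"
    using assms(1) cb unfolding u by (auto simp: turn_def)
  show ?thesis using tl tpe w unfolding u by auto
qed

lemma SAB_min:
  assumes fin: "finite Y" and ne: "Y \<noteq> {}" and lt: "\<forall>y\<in>Y. e < y"
    and IH: "\<forall>b\<in>Y. D x Y b = K x Y b"
  shows "SA x e Y = SB x e Y"
proof (cases "card Y = 1")
  case True
  then obtain b where Yb: "Y = {b}" by (auto simp: card_Suc_eq)
  have "e < b" using lt Yb by simp
  then show ?thesis unfolding SA_def SB_def Yb wt_def by simp
next
  case False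
  then have c2: "card Y \<ge> 2" using ne fin by (cases "card Y") auto
  have Yne2: "Y - {b} \<noteq> {}" if "b \<in> Y" for b
  proof
    assume "Y - {b} = {}"
    then have "Y = {b}" using that by auto
    then show False using c2 by simp
  qed
  have A1: "(\<Sum>u\<in>perms (Y - {b}). x ^ (1 + tp (e # b # u))) =
      x * (\<Sum>u\<in>perms (Y - {b}). if u \<noteq> [] \<and> hd u < b then x ^ (1 + tp (b # u)) else 0)
      + (\<Sum>u\<in>perms (Y - {b}). if u \<noteq> [] \<and> hd u > b then x ^ (1 + tp (b # u)) else 0)"
    if b: "b \<in> Y" for b
  proof -
    have "(\<Sum>u\<in>perms (Y - {b}). x ^ (1 + tp (e # b # u))) =
      (\<Sum>u\<in>perms (Y - {b}). x * (if u \<noteq> [] \<and> hd u < b then x ^ (1 + tp (b # u)) else 0)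
      + (if u \<noteq> [] \<and> hd u > b then x ^ (1 + tp (b # u)) else 0))"
    proof (rule sum.cong[OF refl])
      fix u assume u: "u \<in> perms (Y - {b})"
      have su: "set u = Y - {b}" using u by (auto dest: permutations_of_setD)
      have une: "u \<noteq> []" using su(1) Yne2[OF b] by (metis set_empty)
      have "hd u \<noteq> b" using su une hd_in_set[OF une] by auto
      moreover have eb: "e < b" using lt b by blast
      ultimately show "x ^ (1 + tp (e # b # u)) = x * (if u \<noteq> [] \<and> hd u < b then x ^ (1 + tp (b # u)) else 0)
          + (if u \<noteq> [] \<and> hd u > b then x ^ (1 + tp (b # u)) else 0)"
        using pointA[OF eb une] by simp
    qed
    also have "\<dots> = x * (\<Sum>u\<in>perms (Y - {b}). if u \<noteq> [] \<and> hd u < b then x ^ (1 + tp (b # u)) else 0)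
      + (\<Sum>u\<in>perms (Y - {b}). if u \<noteq> [] \<and> hd u > b then x ^ (1 + tp (b # u)) else 0)"
      by (simp only: sum.distrib sum_distrib_left)
    finally show ?thesis .
  qed
  have A: "SA x e Y = x * (\<Sum>b\<in>Y. D x Y b)
      + (\<Sum>b\<in>Y. \<Sum>u\<in>perms (Y - {b}). if u \<noteq> [] \<and> hd u > b then x ^ (1 + tp (b # u)) else 0)"
  proof -
    have "SA x e Y = (\<Sum>b\<in>Y. \<Sum>u\<in>perms (Y - {b}). x ^ (1 + tp (e # b # u)))"
      unfolding SA_def by (subst perm_cons_sum[OF fin ne]) (rule refl)
    also have "\<dots> = (\<Sum>b\<in>Y. x * D x Y b
      + (\<Sum>u\<in>perms (Y - {b}). if u \<noteq> [] \<and> hd u > b then x ^ (1 + tp (b # u)) else 0))"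
      by (rule sum.cong[OF refl]) (simp only: A1 D_def)
    finally show ?thesis by (simp only: sum.distrib sum_distrib_left)
  qed
  have B: "SB x e Y = (1 + x) * (\<Sum>b\<in>Y. K x Y b)"
  proof -
    have "SB x e Y = (\<Sum>b\<in>Y. \<Sum>u\<in>perms (Y - {b}). if tp (e # b # u) + 1 = length (b # u) then wt x (b # u) else 0)"
      unfolding SB_def by (subst perm_cons_sum[OF fin ne]) (rule refl)
    also have "\<dots> = (\<Sum>b\<in>Y. (1 + x) * K x Y b)"
      unfolding K_def sum_distrib_left
    proof (intro sum.cong refl)
      fix b u assume b: "b \<in> Y" and u: "u \<in> perms (Y - {b})"
      have su: "set u = Y - {b}" "distinct u" using u by (auto dest: permutations_of_setD)
      have une: "u \<noteq> []" using su(1) Yne2[OF b] by (metis set_empty)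
      have d: "distinct (b # u)" using su by auto
      have eb: "e < b" using lt b by blast
      show "(if tp (e # b # u) + 1 = length (b # u) then wt x (b # u) else 0)
        = (1 + x) * (if u \<noteq> [] \<and> hd u < b \<and> tp (b # u) + 1 = length u
                    then x ^ lf (b # u) * (1 + x) ^ (length u - lf (b # u)) else 0)"
        using pointB[OF eb une d] .
    qed
    finally show ?thesis by (simp only: sum_distrib_left)
  qed
  have KD: "(\<Sum>b\<in>Y. K x Y b) = (\<Sum>b\<in>Y. D x Y b)" using IH by simp
  have "SA x e Y = x * (\<Sum>b\<in>Y. D x Y b) + (\<Sum>b\<in>Y. D x Y b)"
    unfolding A sym_DU[OF fin, of x] ..
  also have "\<dots> = (1 + x) * (\<Sum>b\<in>Y. D x Y b)" by (simp only: distrib_right mult_1_left add.commute)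
  also have "\<dots> = SB x e Y" unfolding B KD ..
  finally show ?thesis .
qed

lemma SA_uminus: "SA x e Y = SA x (- e) (uminus ` Y)"
proof -
  have b: "bij_betw uminus Y (uminus ` Y)" by (simp add: bij_betw_def)
  show ?thesis unfolding SA_def perm_map_sum[OF b]
    by (intro sum.cong refl) (metis list.simps(9) tp_uminus)
qed

lemma SB_uminus: "SB x e Y = SB x (- e) (uminus ` Y)"
proof -
  have b: "bij_betw uminus Y (uminus ` Y)" by (simp add: bij_betw_def)
  have "wt x (map uminus S) = wt x S" for S unfolding wt_def by (simp add: lf_uminus)
  then show ?thesis unfolding SB_def perm_map_sum[OF b]
    by (intro sum.cong refl) (metis length_map list.simps(9) tp_uminus)
qed




lemma SAB:
  assumes fin: "finite Y" and ne: "Y \<noteq> {}" and ext: "(\<forall>y\<in>Y. e < y) \<or> (\<forall>y\<in>Y. y < e)"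
    and IH: "\<And>Z b. finite Z \<Longrightarrow> card Z = card Y \<Longrightarrow> b \<in> Z \<Longrightarrow> D x Z b = K x Z b"
  shows "SA x e Y = SB x e Y"
proof (cases "\<forall>y\<in>Y. e < y")
  case True
  then show ?thesis using SAB_min[OF fin ne True] IH[OF fin refl] by blast
next
  case False
  then have lt: "\<forall>y\<in>Y. y < e" using ext by blast
  have fin': "finite (uminus ` Y)" using fin by simp
  have ne': "uminus ` Y \<noteq> {}" using ne by simp
  have lt': "\<forall>y\<in>uminus ` Y. - e < y" using lt by auto
  have cd: "card (uminus ` Y) = card Y" by (simp add: card_image)
  have "SA x (- e) (uminus ` Y) = SB x (- e) (uminus ` Y)"
    using SAB_min[OF fin' ne' lt'] IH[OF fin' cd] by blast
  then show ?thesis using SA_uminus SB_uminus by metis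
qed

lemma SA_swap:
  assumes fin: "finite W" and ne: "W \<noteq> {}" and mM: "Min W \<noteq> Max W"
  shows "SA x (Min W) (W - {Min W}) = SA x (Max W) (W - {Max W})"
proof -
  define m where "m = Min W"
  define M where "M = Max W"
  obtain \<rho> where r: "bij_betw \<rho> W W" "\<forall>x\<in>W. \<forall>y\<in>W. x < y \<longrightarrow> \<rho> y < \<rho> x"
    using rev_iso[OF fin] by blast
  have mW: "m \<in> W" "M \<in> W" using fin ne m_def M_def by auto
  have rmW: "\<rho> m \<in> W" using r(1) mW by (auto simp: bij_betw_def)
  have img: "\<rho> ` W = W" using r(1) by (simp add: bij_betw_def)
  have le: "z \<le> \<rho> m" if z: "z \<in> W" for z
  proof -
    obtain y where y: "y \<in> W" "z = \<rho> y" using z img by blast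
    show ?thesis
    proof (cases "y = m")
      case True then show ?thesis using y by simp
    next
      case False
      then have "m < y" using y(1) fin m_def by (metis Min_le order_le_less)
      then show ?thesis using r(2) y mW by fastforce
    qed
  qed
  have rm: "\<rho> m = M" unfolding M_def using fin le rmW by (intro Max_eqI[symmetric]) auto
  have b1: "bij_betw \<rho> {m} {M}" using rm by (auto simp: bij_betw_def)
  have b: "bij_betw \<rho> (W - {m}) (W - {M})"
    by (rule bij_betw_DiffI[OF r(1) b1]) (use mW in auto)
  have "SA x M (W - {M}) = (\<Sum>S\<in>perms (W - {m}). x ^ (1 + tp (M # map \<rho> S)))"
    unfolding SA_def by (rule perm_map_sum[OF b])
  also have "\<dots> = SA x m (W - {m})" unfolding SA_def
  proof (rule sum.cong[OF refl])
    fix S assume S: "S \<in> perms (W - {m})"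
    have sS: "set S = W - {m}" using S by (auto dest: permutations_of_setD)
    have "M # map \<rho> S = map \<rho> (m # S)" using rm by simp
    moreover have "tp (map \<rho> (m # S)) = tp (m # S)"
      by (rule tp_map_anti) (use r(2) sS mW in auto)
    ultimately show "x ^ (1 + tp (M # map \<rho> S)) = x ^ (1 + tp (m # S))" by simp
  qed
  finally show ?thesis unfolding m_def M_def by simp
qed


definition AP :: "real \<Rightarrow> int \<Rightarrow> int \<Rightarrow> int list \<Rightarrow> real" where
  "AP x a e P = (if (if P = [] then e < a else hd P < a) then x ^ (1 + tp (a # P @ [e])) else 0)"

definition BP :: "real \<Rightarrow> int \<Rightarrow> int \<Rightarrow> int list \<Rightarrow> real" where
  "BP x a e P = (if (if P = [] then e < a else hd P < a) \<and> tp (a # P @ [e]) = length P then wt x (a # P) else 0)"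

definition SBt :: "real \<Rightarrow> int \<Rightarrow> int list \<Rightarrow> real" where
  "SBt x e S = (if tp (e # S) + 1 = length S then wt x S else 0)"

lemma tp_mid:
  assumes "S \<noteq> []" "distinct (a # P @ e # S)"
    and ext: "(\<forall>y\<in>set (a # P @ S). e < y) \<or> (\<forall>y\<in>set (a # P @ S). y < e)"
  shows "tp (a # P @ e # S) = tp (a # P @ [e]) + 1 + tp (e # S)"
proof -
  have l: "last (a # P) \<in> set (a # P @ S)" by (metis Un_iff last_in_set list.distinct(1) set_ConsD set_append list.set_intros)
  have h: "hd S \<in> set (a # P @ S)" using assms(1) by simp
  have "turn (last (a # P)) e (hd S)" using ext l h unfolding turn_def by blast
  then show ?thesis using tp_append[of "a # P" e S] assms(1) by simp
qed

lemma ptD: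
  assumes "S \<noteq> []" "distinct (a # P @ e # S)"
    and ext: "(\<forall>y\<in>set (a # P @ S). e < y) \<or> (\<forall>y\<in>set (a # P @ S). y < e)"
  shows "(if P @ e # S \<noteq> [] \<and> hd (P @ e # S) < a then x ^ (1 + tp (a # P @ e # S)) else 0)
       = AP x a e P * x ^ (1 + tp (e # S))"
proof -
  have "x ^ (1 + tp (a # P @ e # S)) = x ^ (1 + tp (a # P @ [e])) * x ^ (1 + tp (e # S))"
    using tp_mid[OF assms] by (simp add: power_add)
  then show ?thesis unfolding AP_def by (cases P) auto
qed

lemma ptK:
  fixes x :: real
  assumes Sne: "S \<noteq> []" and d: "distinct (a # P @ e # S)"
    and ext: "(\<forall>y\<in>set (a # P @ S). e < y) \<or> (\<forall>y\<in>set (a # P @ S). y < e)"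
    and ie: "isext (a # P @ e # S) e" and ni: "\<forall>y\<in>set (a # P). \<not> isext (a # P @ e # S) y"
  shows "(if P @ e # S \<noteq> [] \<and> hd (P @ e # S) < a \<and> tp (a # P @ e # S) + 1 = length (P @ e # S)
          then x ^ lf (a # P @ e # S) * (1 + x) ^ (length (P @ e # S) - lf (a # P @ e # S)) else 0)
       = BP x a e P * SBt x e S"
proof -
  have tpm: "tp (a # P @ e # S) = tp (a # P @ [e]) + 1 + tp (e # S)" using tp_mid[OF Sne d ext] .
  have b1: "tp (a # P @ [e]) \<le> length P" using tp_le2[of "a # P @ [e]"] by simp
  have b2: "tp (e # S) + 1 \<le> length S" using tp_le2[of "e # S"] Sne by (cases S) auto
  have eq: "(tp (a # P @ e # S) + 1 = length (P @ e # S)) \<longleftrightarrow>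
      (tp (a # P @ [e]) = length P \<and> tp (e # S) + 1 = length S)" using tpm b1 b2 by auto
  have lfs: "lf (a # P @ e # S) = lf (a # P) + lf S"
    using lf_split[of "a # P" e S] ie ni by simp
  have dP: "distinct (a # P)" "distinct S" using d by auto
  have lf1: "lf (a # P) \<le> length P + 1" using lf_bounds[OF dP(1)] by simp
  have lf2: "lf S \<le> length S" using lf_bounds[OF dP(2) Sne] by simp
  have w: "x ^ lf (a # P @ e # S) * (1 + x) ^ (length (P @ e # S) - lf (a # P @ e # S))
      = wt x (a # P) * wt x S"
  proof -
    have "length (P @ e # S) - lf (a # P @ e # S) = (length (a # P) - lf (a # P)) + (length S - lf S)"
      using lfs lf1 lf2 by simp
    then show ?thesis unfolding wt_def lfs by (simp add: power_add)
  qed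
  show ?thesis unfolding BP_def SBt_def using eq w by (cases P) auto
qed


lemma snoc_decomp:
  assumes "P \<noteq> []"
  obtains ys c where "a # P = ys @ [c]" "ys \<noteq> []" "a # P @ [e] = ys @ [c, e]"
proof -
  define ys where "ys = butlast (a # P)"
  define c where "c = last (a # P)"
  have 1: "a # P = ys @ [c]" unfolding ys_def c_def by simp
  have 2: "ys \<noteq> []" unfolding ys_def using assms by (cases P) auto
  have 3: "a # P @ [e] = ys @ [c, e]" using 1 by (metis append_Cons append_assoc append_Cons append_Nil)
  show ?thesis using that 1 2 3 by blast
qed

lemma turn_pair:
  assumes d: "distinct (a # P)" and Pne: "P \<noteq> []"
    and mlt: "\<forall>y\<in>set (a # P). m < y" and Mgt: "\<forall>y\<in>set (a # P). y < M"
  shows "\<exists>t1 t2. tp (a # P @ [m]) = tp (a # P) + t1 \<and> tp (a # P @ [M]) = tp (a # P) + t2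
     \<and> ((t1 = 1 \<and> t2 = 0) \<or> (t1 = 0 \<and> t2 = 1))"
proof -
  obtain ys c where yc: "a # P = ys @ [c]" "ys \<noteq> []" by (meson snoc_decomp Pne)
  have e1: "a # P @ [m] = ys @ [c, m]" "a # P @ [M] = ys @ [c, M]" using yc(1) by (metis append_Cons append_assoc append_Nil)+
  have lc: "last ys \<in> set (a # P)" "c \<in> set (a # P)" using yc by auto
  have ne: "last ys \<noteq> c" using d yc by (metis distinct_append last_in_set not_distinct_conv_prefix
        distinct.simps(2) distinct1_rotate rotate1.simps(2) set_ConsD)
  have t: "turn (last ys) c m = (last ys < c)" "turn (last ys) c M = (c < last ys)"
    using lc mlt Mgt ne unfolding turn_def by auto
  show ?thesis unfolding e1 tp_snoc2[OF yc(2)] yc(1)[symmetric] t using ne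
    by (cases "last ys < c") auto
qed

lemma pairA:
  fixes x :: real
  assumes d: "distinct (a # P)" and Pne: "P \<noteq> []"
    and mlt: "\<forall>y\<in>set (a # P). m < y" and Mgt: "\<forall>y\<in>set (a # P). y < M"
  shows "AP x a m P + AP x a M P = (1 + x) * (if P \<noteq> [] \<and> hd P < a then x ^ (1 + tp (a # P)) else 0)"
proof -
  obtain t1 t2 where t: "tp (a # P @ [m]) = tp (a # P) + t1" "tp (a # P @ [M]) = tp (a # P) + t2"
    "(t1 = 1 \<and> t2 = 0) \<or> (t1 = 0 \<and> t2 = 1)" using turn_pair[OF assms] by blast
  show ?thesis unfolding AP_def using Pne t by (auto simp: power_add algebra_simps)
qed

lemma pairB:
  fixes x :: real
  assumes d: "distinct (a # P)" and Pne: "P \<noteq> []"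
    and mlt: "\<forall>y\<in>set (a # P). m < y" and Mgt: "\<forall>y\<in>set (a # P). y < M"
  shows "BP x a m P + BP x a M P = (1 + x) * (if P \<noteq> [] \<and> hd P < a \<and> tp (a # P) + 1 = length P
      then x ^ lf (a # P) * (1 + x) ^ (length P - lf (a # P)) else 0)"
proof -
  obtain t1 t2 where t: "tp (a # P @ [m]) = tp (a # P) + t1" "tp (a # P @ [M]) = tp (a # P) + t2"
    "(t1 = 1 \<and> t2 = 0) \<or> (t1 = 0 \<and> t2 = 1)" using turn_pair[OF assms] by blast
  have b: "tp (a # P) + 1 \<le> length P" using tp_le2[of "a # P"] Pne by (cases P) auto
  have lfl: "lf (a # P) \<le> length P" using lf_le_len[OF d Pne] .
  have w: "wt x (a # P) = (1 + x) * (x ^ lf (a # P) * (1 + x) ^ (length P - lf (a # P)))"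
    unfolding wt_def using lfl by (simp add: Suc_diff_le)
  show ?thesis unfolding BP_def using Pne t b w by auto
qed

lemma pair0:
  fixes x :: real
  assumes "m < a" "a < M"
  shows "AP x a m [] + AP x a M [] = x" "BP x a m [] + BP x a M [] = x"
  using assms unfolding AP_def BP_def wt_def by auto


lemma DK:
  fixes x :: real
  shows "finite V \<Longrightarrow> a \<in> V \<Longrightarrow> D x V a = K x V a"
proof (induction "card V" arbitrary: V a rule: less_induct)
  case less
  note fin = less.prems(1) and aV = less.prems(2)
  have IH: "D x Z b = K x Z b" if "finite Z" "card Z < card V" "b \<in> Z" for Z b
    using less.hyps that by blast
  define U where "U = V - {a}"
  have finU: "finite U" using fin U_def by simp
  have cU: "card U < card V" using card_Diff1_less[OF fin aV] U_def by simp
  have aU: "a \<notin> U" using U_def by simp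
  have UV: "U \<subseteq> V" using U_def by auto
  have Dd: "D x V a = (\<Sum>u\<in>perms U. if u \<noteq> [] \<and> hd u < a then x ^ (1 + tp (a # u)) else 0)"
    unfolding D_def U_def ..
  have Kd: "K x V a = (\<Sum>u\<in>perms U. if u \<noteq> [] \<and> hd u < a \<and> tp (a # u) + 1 = length u
      then x ^ lf (a # u) * (1 + x) ^ (length u - lf (a # u)) else 0)"
    unfolding K_def U_def ..
  show ?case
  proof (cases "U = {}")
    case True
    then show ?thesis unfolding Dd Kd by simp
  next
    case Une: False
    have memU: "u \<noteq> [] \<and> hd u \<in> U \<and> distinct u \<and> set u = U" if "u \<in> perms U" for u
    proof -
      have s: "set u = U" "distinct u" using that by (auto dest: permutations_of_setD)
      have "u \<noteq> []" using s(1) Une by (metis set_empty)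
      then show ?thesis using s hd_in_set by metis
    qed
    have minle: "Min V \<le> y" "y \<le> Max V" if "y \<in> V" for y using fin that by auto
    consider (mn) "a = Min V" | (mx) "a = Max V" | (mid) "a \<noteq> Min V" "a \<noteq> Max V" by blast
    then show ?thesis
    proof cases
      case mn
      have gt: "a < y" if "y \<in> U" for y using that minle[of y] mn U_def by force
      have "D x V a = 0" unfolding Dd
      proof (rule sum.neutral, rule ballI)
        fix u assume "u \<in> perms U"
        then have "\<not> hd u < a" using memU gt by (meson not_less_iff_gr_or_eq)
        then show "(if u \<noteq> [] \<and> hd u < a then x ^ (1 + tp (a # u)) else 0) = 0" by simp
      qed
      moreover have "K x V a = 0" unfolding Kd
      proof (rule sum.neutral, rule ballI)
        fix u assume "u \<in> perms U"
        then have "\<not> hd u < a" using memU gt by (meson not_less_iff_gr_or_eq)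
        then show "(if u \<noteq> [] \<and> hd u < a \<and> tp (a # u) + 1 = length u
          then x ^ lf (a # u) * (1 + x) ^ (length u - lf (a # u)) else 0) = 0" by simp
      qed
      ultimately show ?thesis by simp
    next
      case mx
      have lt: "y < a" if "y \<in> U" for y using that minle[of y] mx U_def by force
      have "D x V a = SA x a U" unfolding Dd SA_def
      proof (rule sum.cong[OF refl])
        fix u assume "u \<in> perms U"
        then have "u \<noteq> []" "hd u < a" using memU lt by auto
        then show "(if u \<noteq> [] \<and> hd u < a then x ^ (1 + tp (a # u)) else 0) = x ^ (1 + tp (a # u))" by simp
      qed
      moreover have "K x V a = SB x a U" unfolding Kd SB_def
      proof (rule sum.cong[OF refl])
        fix u assume u: "u \<in> perms U"
        then have un: "u \<noteq> []" "hd u < a" using memU lt by auto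
        have "\<forall>z\<in>set (a # u). z \<le> a" using memU[OF u] lt by (auto intro: less_imp_le)
        then have "isext (a # u) a" using isext_iff[of "a # u" a] by simp
        then have ie: "isext ([] @ a # u) a" by simp
        have "lf (a # u) = lf u" using lf_split[of "[]" a u] ie un(1) by simp
        then show "(if u \<noteq> [] \<and> hd u < a \<and> tp (a # u) + 1 = length u
          then x ^ lf (a # u) * (1 + x) ^ (length u - lf (a # u)) else 0)
          = (if tp (a # u) + 1 = length u then wt x u else 0)" using un by (simp add: wt_def)
      qed
      moreover have "SA x a U = SB x a U"
        by (rule SAB[OF finU Une]) (use lt IH cU in auto)
      ultimately show ?thesis by simp
    next
      case mid
      define m where "m = Min V"
      define M where "M = Max V"
      have neV: "V \<noteq> {}" using aV by auto
      have mV: "m \<in> V" "M \<in> V" using fin neV m_def M_def by auto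
      have ma: "m < a" "a < M" using minle[OF aV] mid m_def M_def by auto
      have mU: "m \<in> U" "M \<in> U" using mV ma U_def by auto
      have mM: "m \<noteq> M" using ma by simp
      define E where "E = {m, M}"
      have EU: "E \<subseteq> U" "E \<noteq> {}" using mU E_def by auto
      have facts: "S \<noteq> [] \<and> distinct (a # P @ e # S) \<and>
          ((\<forall>y\<in>set (a # P @ S). e < y) \<or> (\<forall>y\<in>set (a # P @ S). y < e)) \<and>
          isext (a # P @ e # S) e \<and> (\<forall>y\<in>set (a # P). \<not> isext (a # P @ e # S) y)"
        if eX: "e \<in> E" "X \<in> Pow (U - E)" "P \<in> perms X" "S \<in> perms (U - X - {e})" for e X P S
      proof -
        have sP: "set P = X" "distinct P" "set S = U - X - {e}" "distinct S"
          using eX by (auto dest: permutations_of_setD)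
        have XU: "X \<subseteq> U - E" using eX by auto
        have oth: "(if e = m then M else m) \<in> set S" using sP XU mU eX(1) E_def mM by auto
        then have Sne: "S \<noteq> []" by auto
        have d: "distinct (a # P @ e # S)" using sP XU aU eX(1) EU by auto
        have sw: "set (a # P @ e # S) = V" using sP XU eX(1) EU aV U_def by auto
        have ext: "(\<forall>y\<in>set (a # P @ S). e < y) \<or> (\<forall>y\<in>set (a # P @ S). y < e)"
        proof -
          have sub: "set (a # P @ S) \<subseteq> V - {e}" using d sw by auto
          show ?thesis
          proof (cases "e = m")
            case True
            then show ?thesis using sub minle m_def by (metis Diff_iff insertI1 order_le_less subsetD)
          next
            case False
            then have "e = M" using eX(1) E_def by auto
            then show ?thesis using sub minle M_def by (metis Diff_iff insertI1 order_le_less subsetD)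
          qed
        qed
        have iseq: "isext (a # P @ e # S) y \<longleftrightarrow> y = m \<or> y = M" for y
          unfolding isext_def sw m_def M_def ..
        have ie: "isext (a # P @ e # S) e" using iseq eX(1) E_def by auto
        have ni: "\<forall>y\<in>set (a # P). \<not> isext (a # P @ e # S) y"
          using iseq sP XU ma E_def by auto
        show ?thesis using Sne d ext ie ni by blast
      qed
      define s where "s = (\<lambda>X. SA x m (U - X - {m}))"
      have sswap: "SA x e (U - X - {e}) = s X" if "e \<in> E" "X \<in> Pow (U - E)" for e X
      proof (cases "e = m")
        case True then show ?thesis unfolding s_def by simp
      next
        case False
        then have eM: "e = M" using that E_def by auto
        define W where "W = U - X"
        have fW: "finite W" using finU W_def by simp
        have inW: "m \<in> W" "M \<in> W" using that mU E_def W_def by auto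
        have neW: "W \<noteq> {}" using inW by auto
        have WV: "W \<subseteq> V" using UV W_def by auto
        have minW: "Min W = m" by (rule Min_eqI[OF fW]) (use inW WV minle m_def in auto)
        have maxW: "Max W = M" by (rule Max_eqI[OF fW]) (use inW WV minle M_def in auto)
        have "SA x M (W - {M}) = SA x m (W - {m})"
          using SA_swap[OF fW neW] minW maxW mM by simp
        then show ?thesis unfolding s_def eM W_def .
      qed
      have sSB: "SB x e (U - X - {e}) = s X" if "e \<in> E" "X \<in> Pow (U - E)" for e X
      proof -
        define Y where "Y = U - X - {e}"
        have fY: "finite Y" using finU Y_def by simp
        have oth: "(if e = m then M else m) \<in> Y" using that mU E_def mM Y_def by auto
        then have neY: "Y \<noteq> {}" by auto
        have YV: "Y \<subseteq> V - {a, e}" using Y_def U_def that E_def mU by auto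
        have eV: "e \<in> V" using that E_def mV by auto
        have ext: "(\<forall>y\<in>Y. e < y) \<or> (\<forall>y\<in>Y. y < e)"
        proof (cases "e = m")
          case True
          then show ?thesis using YV minle m_def by (metis Diff_iff insertI1 insert_commute order_le_less subsetD)
        next
          case False
          then have "e = M" using that E_def by auto
          then show ?thesis using YV minle M_def by (metis Diff_iff insertI1 insert_commute order_le_less subsetD)
        qed
        have "Y \<subseteq> U" using Y_def by auto
        then have "card Y \<le> card U" by (rule card_mono[OF finU])
        then have cY: "card Y < card V" using cU by simp
        have "SA x e Y = SB x e Y"
          by (rule SAB[OF fY neY ext]) (use IH cY in auto)
        then show ?thesis using sswap[OF that] Y_def by simp
      qed
      have ptsets: "distinct (a # P) \<and> (X \<noteq> {} \<longrightarrow> P \<noteq> []) \<and> (\<forall>y\<in>set (a # P). m < y) \<and> (\<forall>y\<in>set (a # P). y < M)"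
        if "X \<in> Pow (U - E)" "P \<in> perms X" for X P
      proof -
        have sP: "set P = X" "distinct P" using that by (auto dest: permutations_of_setD)
        have XU: "X \<subseteq> U - E" using that by auto
        have sub: "set (a # P) \<subseteq> V - {m, M}" using sP XU aV ma U_def E_def by auto
        have "\<forall>y\<in>set (a # P). m < y" using sub minle m_def by (metis Diff_iff insertI1 order_le_less subsetD)
        moreover have "\<forall>y\<in>set (a # P). y < M" using sub minle M_def
          by (metis Diff_iff insertI1 insert_commute order_le_less subsetD)
        moreover have "distinct (a # P)" using sP XU aU by auto
        moreover have "X \<noteq> {} \<longrightarrow> P \<noteq> []" using sP by auto
        ultimately show ?thesis by blast
      qed
      have stepD: "D x V a = (\<Sum>e\<in>E. \<Sum>X\<in>Pow (U - E). (\<Sum>P\<in>perms X. AP x a e P) * s X)"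
      proof -
        have "D x V a = (\<Sum>e\<in>E. \<Sum>X\<in>Pow (U - E). \<Sum>P\<in>perms X. \<Sum>S\<in>perms (U - X - {e}).
            (if P @ e # S \<noteq> [] \<and> hd (P @ e # S) < a then x ^ (1 + tp (a # P @ e # S)) else 0))"
          unfolding Dd by (subst perm_split_sum[OF finU EU]) (rule refl)
        also have "\<dots> = (\<Sum>e\<in>E. \<Sum>X\<in>Pow (U - E). \<Sum>P\<in>perms X. \<Sum>S\<in>perms (U - X - {e}).
            AP x a e P * x ^ (1 + tp (e # S)))"
        proof (intro sum.cong refl)
          fix e X P S assume h: "e \<in> E" "X \<in> Pow (U - E)" "P \<in> perms X" "S \<in> perms (U - X - {e})"
          have f: "S \<noteq> []" "distinct (a # P @ e # S)"
            "(\<forall>y\<in>set (a # P @ S). e < y) \<or> (\<forall>y\<in>set (a # P @ S). y < e)"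
            using facts[OF h] by blast+
          show "(if P @ e # S \<noteq> [] \<and> hd (P @ e # S) < a then x ^ (1 + tp (a # P @ e # S)) else 0)
              = AP x a e P * x ^ (1 + tp (e # S))" by (rule ptD[OF f])
        qed
        also have "\<dots> = (\<Sum>e\<in>E. \<Sum>X\<in>Pow (U - E). (\<Sum>P\<in>perms X. AP x a e P) * SA x e (U - X - {e}))"
          unfolding SA_def sum_product ..
        also have "\<dots> = (\<Sum>e\<in>E. \<Sum>X\<in>Pow (U - E). (\<Sum>P\<in>perms X. AP x a e P) * s X)"
          by (intro sum.cong refl) (simp add: sswap)
        finally show ?thesis .
      qed
      have stepK: "K x V a = (\<Sum>e\<in>E. \<Sum>X\<in>Pow (U - E). (\<Sum>P\<in>perms X. BP x a e P) * s X)"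
      proof -
        have "K x V a = (\<Sum>e\<in>E. \<Sum>X\<in>Pow (U - E). \<Sum>P\<in>perms X. \<Sum>S\<in>perms (U - X - {e}).
            (if P @ e # S \<noteq> [] \<and> hd (P @ e # S) < a \<and> tp (a # P @ e # S) + 1 = length (P @ e # S)
             then x ^ lf (a # P @ e # S) * (1 + x) ^ (length (P @ e # S) - lf (a # P @ e # S)) else 0))"
          unfolding Kd by (subst perm_split_sum[OF finU EU]) (rule refl)
        also have "\<dots> = (\<Sum>e\<in>E. \<Sum>X\<in>Pow (U - E). \<Sum>P\<in>perms X. \<Sum>S\<in>perms (U - X - {e}).
            BP x a e P * SBt x e S)"
        proof (intro sum.cong refl)
          fix e X P S assume h: "e \<in> E" "X \<in> Pow (U - E)" "P \<in> perms X" "S \<in> perms (U - X - {e})"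
          have f: "S \<noteq> []" "distinct (a # P @ e # S)"
            "(\<forall>y\<in>set (a # P @ S). e < y) \<or> (\<forall>y\<in>set (a # P @ S). y < e)"
            "isext (a # P @ e # S) e" "\<forall>y\<in>set (a # P). \<not> isext (a # P @ e # S) y"
            using facts[OF h] by blast+
          show "(if P @ e # S \<noteq> [] \<and> hd (P @ e # S) < a \<and> tp (a # P @ e # S) + 1 = length (P @ e # S)
             then x ^ lf (a # P @ e # S) * (1 + x) ^ (length (P @ e # S) - lf (a # P @ e # S)) else 0)
              = BP x a e P * SBt x e S" by (rule ptK[OF f])
        qed
        also have "\<dots> = (\<Sum>e\<in>E. \<Sum>X\<in>Pow (U - E). (\<Sum>P\<in>perms X. BP x a e P) * SB x e (U - X - {e}))"
          unfolding SB_def SBt_def sum_product ..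
        also have "\<dots> = (\<Sum>e\<in>E. \<Sum>X\<in>Pow (U - E). (\<Sum>P\<in>perms X. BP x a e P) * s X)"
          by (intro sum.cong refl) (simp add: sSB)
        finally show ?thesis .
      qed
      have collapse: "(\<Sum>e\<in>E. \<Sum>X\<in>Pow (U - E). g e X * s X) = (\<Sum>X\<in>Pow (U - E). (g m X + g M X) * s X)"
        for g :: "int \<Rightarrow> int set \<Rightarrow> real"
        unfolding E_def using mM by (simp add: sum.distrib[symmetric] distrib_right)
      have cA: "(\<Sum>P\<in>perms X. AP x a m P) + (\<Sum>P\<in>perms X. AP x a M P)
          = (if X = {} then x else (1 + x) * D x (insert a X) a)" if X: "X \<in> Pow (U - E)" for X
      proof (cases "X = {}")
        case True then show ?thesis using pair0[OF ma] by simp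
      next
        case False
        have "(\<Sum>P\<in>perms X. AP x a m P) + (\<Sum>P\<in>perms X. AP x a M P) = (\<Sum>P\<in>perms X. AP x a m P + AP x a M P)"
          by (simp add: sum.distrib)
        also have "\<dots> = (\<Sum>P\<in>perms X. (1 + x) * (if P \<noteq> [] \<and> hd P < a then x ^ (1 + tp (a # P)) else 0))"
        proof (rule sum.cong[OF refl])
          fix P assume P: "P \<in> perms X"
          have h: "distinct (a # P)" "P \<noteq> []" "\<forall>y\<in>set (a # P). m < y" "\<forall>y\<in>set (a # P). y < M"
            using ptsets[OF X P] False by blast+
          show "AP x a m P + AP x a M P = (1 + x) * (if P \<noteq> [] \<and> hd P < a then x ^ (1 + tp (a # P)) else 0)"
            by (rule pairA[OF h])
        qed
        also have "\<dots> = (1 + x) * D x (insert a X) a"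
        proof -
          have "insert a X - {a} = X" using X aU by auto
          then show ?thesis unfolding D_def sum_distrib_left by simp
        qed
        finally show ?thesis using False by simp
      qed
      have cB: "(\<Sum>P\<in>perms X. BP x a m P) + (\<Sum>P\<in>perms X. BP x a M P)
          = (if X = {} then x else (1 + x) * K x (insert a X) a)" if X: "X \<in> Pow (U - E)" for X
      proof (cases "X = {}")
        case True then show ?thesis using pair0[OF ma] by simp
      next
        case False
        have "(\<Sum>P\<in>perms X. BP x a m P) + (\<Sum>P\<in>perms X. BP x a M P) = (\<Sum>P\<in>perms X. BP x a m P + BP x a M P)"
          by (simp add: sum.distrib)
        also have "\<dots> = (\<Sum>P\<in>perms X. (1 + x) * (if P \<noteq> [] \<and> hd P < a \<and> tp (a # P) + 1 = length P
            then x ^ lf (a # P) * (1 + x) ^ (length P - lf (a # P)) else 0))"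
        proof (rule sum.cong[OF refl])
          fix P assume P: "P \<in> perms X"
          have h: "distinct (a # P)" "P \<noteq> []" "\<forall>y\<in>set (a # P). m < y" "\<forall>y\<in>set (a # P). y < M"
            using ptsets[OF X P] False by blast+
          show "BP x a m P + BP x a M P = (1 + x) * (if P \<noteq> [] \<and> hd P < a \<and> tp (a # P) + 1 = length P
            then x ^ lf (a # P) * (1 + x) ^ (length P - lf (a # P)) else 0)"
            by (rule pairB[OF h])
        qed
        also have "\<dots> = (1 + x) * K x (insert a X) a"
        proof -
          have "insert a X - {a} = X" using X aU by auto
          then show ?thesis unfolding K_def sum_distrib_left by simp
        qed
        finally show ?thesis using False by simp
      qed
      have cAB: "(if X = {} then x else (1 + x) * D x (insert a X) a) = (if X = {} then x else (1 + x) * K x (insert a X) a)"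
        if X: "X \<in> Pow (U - E)" for X
      proof -
        have sub: "insert a X \<subseteq> V - {m}" using X aV ma U_def E_def by auto
        have "card (insert a X) < card V"
          by (rule psubset_card_mono[OF fin]) (use sub mV in auto)
        moreover have "finite (insert a X)" using X finU finite_subset by auto
        ultimately show ?thesis using IH by simp
      qed
      have "D x V a = (\<Sum>X\<in>Pow (U - E). (if X = {} then x else (1 + x) * D x (insert a X) a) * s X)"
        unfolding stepD collapse by (intro sum.cong refl) (simp add: cA)
      also have "\<dots> = (\<Sum>X\<in>Pow (U - E). (if X = {} then x else (1 + x) * K x (insert a X) a) * s X)"
        by (intro sum.cong refl) (simp only: cAB)
      also have "\<dots> = K x V a"
        unfolding stepK collapse by (intro sum.cong refl) (simp add: cB)
      finally show ?thesis .
    qed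
  qed
qed




definition tset :: "int list \<Rightarrow> nat set" where
  "tset w = {i. 1 \<le> i \<and> i + 1 < length w \<and> turn (w ! (i - 1)) (w ! i) (w ! (i + 1))}"

lemma tset_cons3: "tset (a # b # c # r) = (if turn a b c then {1} else {}) \<union> Suc ` tset (b # c # r)"
proof (rule set_eqI)
  fix i
  show "i \<in> tset (a # b # c # r) \<longleftrightarrow> i \<in> (if turn a b c then {1} else {}) \<union> Suc ` tset (b # c # r)"
  proof (cases i)
    case 0 then show ?thesis unfolding tset_def by auto
  next
    case (Suc j)
    show ?thesis
    proof (cases j)
      case 0 then show ?thesis using Suc unfolding tset_def by auto
    next
      case (Suc k)
      then show ?thesis using \<open>i = Suc j\<close> unfolding tset_def by (auto simp: image_iff)
    qed
  qed
qed

lemma tset_short: "length w < 3 \<Longrightarrow> tset w = {}"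
  unfolding tset_def by auto

lemma finite_tset: "finite (tset w)"
  unfolding tset_def by (rule finite_subset[of _ "{..<length w}"]) auto

lemma tp_card: "tp w = card (tset w)"
proof (induction w rule: tp.induct)
  case (1 a b c r)
  have "1 \<notin> Suc ` tset (b # c # r)" unfolding tset_def by auto
  then show ?case using 1 by (simp add: tset_cons3 card_image finite_tset)
qed (auto simp: tset_short)

lemma runB_tp: "runB p = 1 + tp (0 # p)"
proof -
  have "{i \<in> {1..length p - 1}.
            ((0 # p) ! (i - 1) < (0 # p) ! i \<and> (0 # p) ! i > (0 # p) ! (i + 1)) \<or>
            ((0 # p) ! (i - 1) > (0 # p) ! i \<and> (0 # p) ! i < (0 # p) ! (i + 1))} = tset (0 # p)"
    unfolding tset_def turn_def by auto
  then show ?thesis unfolding runB_def Let_def tp_card by simp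
qed

definition Qalt :: "bool \<Rightarrow> int list \<Rightarrow> bool" where
  "Qalt d w = (\<forall>i. Suc i < length w \<longrightarrow> (if even i = d then w ! i < w ! Suc i else w ! Suc i < w ! i))"

lemma Qalt_cons2: "Qalt d (a # b # r) \<longleftrightarrow> (if d then a < b else b < a) \<and> Qalt (\<not> d) (b # r)"
proof
  assume q: "Qalt d (a # b # r)"
  have "(if d then a < b else b < a)" using q[unfolded Qalt_def, rule_format, of 0] by auto
  moreover have "Qalt (\<not> d) (b # r)" unfolding Qalt_def
  proof (intro allI impI)
    fix i assume "Suc i < length (b # r)"
    then have "Suc (Suc i) < length (a # b # r)" by simp
    then show "if even i = (\<not> d) then (b # r) ! i < (b # r) ! Suc i else (b # r) ! Suc i < (b # r) ! i"
      using q[unfolded Qalt_def, rule_format, of "Suc i"] by auto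
  qed
  ultimately show "(if d then a < b else b < a) \<and> Qalt (\<not> d) (b # r)" by blast
next
  assume h: "(if d then a < b else b < a) \<and> Qalt (\<not> d) (b # r)"
  show "Qalt d (a # b # r)" unfolding Qalt_def
  proof (intro allI impI)
    fix i assume i: "Suc i < length (a # b # r)"
    show "if even i = d then (a # b # r) ! i < (a # b # r) ! Suc i else (a # b # r) ! Suc i < (a # b # r) ! i"
    proof (cases i)
      case 0 then show ?thesis using h by auto
    next
      case (Suc j)
      then have "Suc j < length (b # r)" using i by simp
      then show ?thesis using h[THEN conjunct2, unfolded Qalt_def, rule_format, of j] Suc by auto
    qed
  qed
qed

lemma Qalt_tp:
  "distinct w \<Longrightarrow> length w \<ge> 2 \<Longrightarrow>
    Qalt d w \<longleftrightarrow> tp w + 2 = length w \<and> (if d then w ! 0 < w ! 1 else w ! 1 < w ! 0)"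
proof (induction w arbitrary: d rule: tp.induct)
  case (1 a b c r)
  have IH: "Qalt (\<not> d) (b # c # r) \<longleftrightarrow> tp (b # c # r) + 2 = length (b # c # r) \<and> (if \<not> d then b < c else c < b)"
    using 1 by simp
  have bd: "tp (b # c # r) + 2 \<le> length (b # c # r)" by (rule tp_le2) simp
  have ne: "a \<noteq> b" "b \<noteq> c" using 1(2) by auto
  have q: "Qalt d (a # b # c # r) \<longleftrightarrow> (if d then a < b else b < a) \<and> Qalt (\<not> d) (b # c # r)"
    by (rule Qalt_cons2)
  show ?case unfolding q IH using bd ne
    by (cases d; cases "a < b"; cases "b < c") (auto simp: turn_def)
next
  case ("2_3" a b)
  then show ?case by (simp add: Qalt_def less_Suc_eq)
qed auto


lemma SP_abs: "p \<in> signed_perms n \<Longrightarrow> y \<in> set p \<Longrightarrow> 1 \<le> abs y \<and> abs y \<le> int n"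
  unfolding signed_perms_def by force

lemma SP_facts: "p \<in> signed_perms n \<Longrightarrow> length p = n \<and> distinct p \<and> 0 \<notin> set p"
  using SP_abs[of p n 0] unfolding signed_perms_def by (auto simp: distinct_map)

lemma SP_set: "p \<in> signed_perms n \<Longrightarrow> distinct q \<Longrightarrow> set q = set p \<Longrightarrow> q \<in> signed_perms n"
proof -
  assume p: "p \<in> signed_perms n" and d: "distinct q" and s: "set q = set p"
  have lp: "length p = n" "distinct (map abs p)" "abs ` set p = {1..int n}" using p unfolding signed_perms_def by auto
  have dp: "distinct p" using lp(2) by (simp add: distinct_map)
  have "length q = length p" using d dp s by (metis distinct_card)
  moreover have "inj_on abs (set q)" using lp(2) s by (simp add: distinct_map)
  ultimately show ?thesis using lp d s unfolding signed_perms_def by (simp add: distinct_map)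
qed

lemma SP_finite: "finite (signed_perms n)"
proof -
  have "signed_perms n \<subseteq> {xs. set xs \<subseteq> {- int n..int n} \<and> length xs = n}"
    using SP_abs by (fastforce simp: signed_perms_def abs_le_iff)
  moreover have "finite {xs. set xs \<subseteq> {- int n..int n} \<and> length xs = n}"
    by (rule finite_lists_length_eq) simp
  ultimately show ?thesis by (rule finite_subset)
qed

lemma SP_uminus: "map uminus p \<in> signed_perms n \<longleftrightarrow> p \<in> signed_perms n"
proof -
  have "map abs (map uminus p) = map abs p" by simp
  then show ?thesis unfolding signed_perms_def by (metis (no_types, lifting) length_map mem_Collect_eq)
qed

lemma grp:
  fixes h :: "int list \<Rightarrow> real"
  shows "(\<Sum>p\<in>signed_perms n. h p) = (\<Sum>C\<in>set ` signed_perms n. \<Sum>p\<in>perms C. h p)"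
proof -
  have eq: "{p \<in> signed_perms n. set p = C} = perms C" if Cin: "C \<in> set ` signed_perms n" for C
  proof
    show "{p \<in> signed_perms n. set p = C} \<subseteq> perms C"
      using SP_facts by (auto intro!: permutations_of_setI)
    obtain p0 where p0: "p0 \<in> signed_perms n" "C = set p0" using Cin by blast
    show "perms C \<subseteq> {p \<in> signed_perms n. set p = C}"
    proof
      fix q assume q: "q \<in> perms C"
      have "set q = C" "distinct q" using q by (auto dest: permutations_of_setD)
      then show "q \<in> {p \<in> signed_perms n. set p = C}" using SP_set[OF p0(1)] p0(2) by auto
    qed
  qed
  have "(\<Sum>p\<in>signed_perms n. h p) = (\<Sum>C\<in>set ` signed_perms n. \<Sum>p\<in>{p \<in> signed_perms n. set p = C}. h p)"
    by (rule sum.group[symmetric]) (auto simp: SP_finite)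
  also have "\<dots> = (\<Sum>C\<in>set ` signed_perms n. \<Sum>p\<in>perms C. h p)"
    by (rule sum.cong[OF refl]) (simp add: eq)
  finally show ?thesis .
qed

lemma snakes_char:
  assumes "n \<ge> 1"
  shows "p \<in> snakes n \<longleftrightarrow> p \<in> signed_perms n \<and> tp (0 # p) + 1 = n \<and> 0 < hd p"
proof (cases "p \<in> signed_perms n")
  case False then show ?thesis unfolding snakes_def by simp
next
  case True
  have f: "length p = n" "distinct (0 # p)" using SP_facts[OF True] by auto
  have pne: "p \<noteq> []" using f assms by auto
  have "(\<forall>i<n. let w = 0 # p in (if even i then w ! i < w ! (i + 1) else w ! i > w ! (i + 1)))
      \<longleftrightarrow> Qalt True (0 # p)" unfolding Qalt_def Let_def using f by auto
  also have "\<dots> \<longleftrightarrow> tp (0 # p) + 2 = length (0 # p) \<and> (0 # p) ! 0 < (0 # p) ! 1"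
    using Qalt_tp[OF f(2), of True] f assms by simp
  also have "\<dots> \<longleftrightarrow> tp (0 # p) + 1 = n \<and> 0 < hd p" using f pne by (simp add: hd_conv_nth)
  finally show ?thesis unfolding snakes_def using True by simp
qed

lemma snakes_bar_char:
  assumes "n \<ge> 1"
  shows "p \<in> snakes_bar n \<longleftrightarrow> p \<in> signed_perms n \<and> tp (0 # p) + 1 = n \<and> hd p < 0"
proof -
  have "p \<in> snakes_bar n \<longleftrightarrow> map uminus p \<in> snakes n"
  proof -
    have inv: "map uminus (map uminus q) = q" for q :: "int list" by (induction q) auto
    show ?thesis unfolding snakes_bar_def
    proof
      assume "p \<in> map uminus ` snakes n"
      then obtain q where "q \<in> snakes n" "p = map uminus q" by blast
      then show "map uminus p \<in> snakes n" using inv by simp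
    next
      assume "map uminus p \<in> snakes n"
      then show "p \<in> map uminus ` snakes n" using inv[of p] by (metis image_eqI)
    qed
  qed
  also have "\<dots> \<longleftrightarrow> p \<in> signed_perms n \<and> tp (0 # p) + 1 = n \<and> hd p < 0"
  proof -
    have "tp (0 # map uminus p) = tp (0 # p)" using tp_uminus[of "0 # p"] by simp
    moreover have "p \<in> signed_perms n \<Longrightarrow> p \<noteq> []" using SP_facts[of p n] assms by auto
    ultimately show ?thesis unfolding snakes_char[OF assms] SP_uminus by (auto simp: hd_map)
  qed
  finally show ?thesis .
qed

lemma sum_k:
  fixes c :: "nat \<Rightarrow> real"
  assumes "finite B" "L ` B \<subseteq> T" "finite T"
  shows "(\<Sum>k\<in>T. real (card {p \<in> B. L p = k}) * c k) = (\<Sum>p\<in>B. c (L p))"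
proof -
  have "(\<Sum>k\<in>T. real (card {p \<in> B. L p = k}) * c k) = (\<Sum>k\<in>T. \<Sum>p\<in>{p \<in> B. L p = k}. c (L p))"
    by (rule sum.cong[OF refl]) simp
  also have "\<dots> = (\<Sum>p\<in>B. c (L p))" by (rule sum.group[OF assms(1,3,2)])
  finally show ?thesis .
qed


lemma per_C:
  fixes x :: real
  assumes C: "C \<in> set ` signed_perms n" and n: "n \<ge> 1"
  shows "(\<Sum>p\<in>perms C. if even (card (Negs p)) \<and> hd p < 0 then x ^ (1 + tp (0 # p)) else 0)
       = (\<Sum>p\<in>perms C. if even (card (Negs p)) \<and> hd p < 0 \<and> tp (0 # p) + 1 = n
            then x ^ lf (0 # p) * (1 + x) ^ (n - lf (0 # p)) else 0)"
    and "(\<Sum>p\<in>perms C. if even (card (Negs p)) \<and> hd p > 0 then x ^ (1 + tp (0 # p)) else 0)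
       = (\<Sum>p\<in>perms C. if even (card (Negs p)) \<and> hd p > 0 \<and> tp (0 # p) + 1 = n
            then x ^ lf (0 # p) * (1 + x) ^ (n - lf (0 # p)) else 0)"
proof -
  obtain p0 where p0: "p0 \<in> signed_perms n" "C = set p0" using C by blast
  have f0: "length p0 = n" "distinct p0" "0 \<notin> set p0" using SP_facts[OF p0(1)] by auto
  have finC: "finite C" using p0 by simp
  have C0: "0 \<notin> C" using f0 p0 by simp
  have Cne: "C \<noteq> {}" using f0 p0 n by auto
  define ev where "ev = even (card {y \<in> C. y < 0})"
  have mem: "set p = C \<and> distinct p \<and> p \<noteq> [] \<and> length p = n \<and> even (card (Negs p)) = ev" if "p \<in> perms C" for p
  proof -
    have s: "set p = C" "distinct p" using that by (auto dest: permutations_of_setD)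
    have "length p = n" using s f0 p0 by (metis distinct_card)
    moreover have "p \<noteq> []" using s Cne by auto
    ultimately show ?thesis using s unfolding ev_def Negs_def by simp
  qed
  have ins: "insert 0 C - {0} = C" using C0 by auto
  have ins2: "insert 0 (uminus ` C) - {0} = uminus ` C" using C0 by auto
  have DK0: "D x (insert 0 C) 0 = K x (insert 0 C) 0" by (rule DK) (use finC in auto)
  have DK1: "D x (insert 0 (uminus ` C)) 0 = K x (insert 0 (uminus ` C)) 0" by (rule DK) (use finC in auto)
  show "(\<Sum>p\<in>perms C. if even (card (Negs p)) \<and> hd p < 0 then x ^ (1 + tp (0 # p)) else 0)
       = (\<Sum>p\<in>perms C. if even (card (Negs p)) \<and> hd p < 0 \<and> tp (0 # p) + 1 = n
            then x ^ lf (0 # p) * (1 + x) ^ (n - lf (0 # p)) else 0)"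
  proof (cases ev)
    case False
    then show ?thesis using mem by (simp add: sum.neutral)
  next
    case True
    have "(\<Sum>p\<in>perms C. if even (card (Negs p)) \<and> hd p < 0 then x ^ (1 + tp (0 # p)) else 0) = D x (insert 0 C) 0"
      unfolding D_def ins using mem True by (intro sum.cong refl) simp
    moreover have "(\<Sum>p\<in>perms C. if even (card (Negs p)) \<and> hd p < 0 \<and> tp (0 # p) + 1 = n
            then x ^ lf (0 # p) * (1 + x) ^ (n - lf (0 # p)) else 0) = K x (insert 0 C) 0"
      unfolding K_def ins using mem True by (intro sum.cong refl) simp
    ultimately show ?thesis using DK0 by simp
  qed
  have bu: "bij_betw uminus C (uminus ` C)" by (simp add: bij_betw_def)
  have tpu: "tp (0 # map uminus p) = tp (0 # p)" for p using tp_uminus[of "0 # p"] by simp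
  have lfu: "lf (0 # map uminus p) = lf (0 # p)" for p using lf_uminus[of "0 # p"] by simp
  show "(\<Sum>p\<in>perms C. if even (card (Negs p)) \<and> hd p > 0 then x ^ (1 + tp (0 # p)) else 0)
       = (\<Sum>p\<in>perms C. if even (card (Negs p)) \<and> hd p > 0 \<and> tp (0 # p) + 1 = n
            then x ^ lf (0 # p) * (1 + x) ^ (n - lf (0 # p)) else 0)"
  proof (cases ev)
    case False
    then show ?thesis using mem by (simp add: sum.neutral)
  next
    case True
    have "(\<Sum>p\<in>perms C. if even (card (Negs p)) \<and> hd p > 0 then x ^ (1 + tp (0 # p)) else 0)
        = D x (insert 0 (uminus ` C)) 0"
      unfolding D_def ins2 perm_map_sum[OF bu] using mem True
      by (intro sum.cong refl) (simp add: tpu hd_map)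
    moreover have "(\<Sum>p\<in>perms C. if even (card (Negs p)) \<and> hd p > 0 \<and> tp (0 # p) + 1 = n
            then x ^ lf (0 # p) * (1 + x) ^ (n - lf (0 # p)) else 0) = K x (insert 0 (uminus ` C)) 0"
      unfolding K_def ins2 perm_map_sum[OF bu] using mem True
      by (intro sum.cong refl) (simp add: tpu lfu hd_map)
    ultimately show ?thesis using DK1 by simp
  qed
qed


theorem mainTheorem18:
  fixes n :: nat and x :: real
  assumes "n \<ge> 1"
  shows "RD_neg n x = (\<Sum>k=1..(n + 2) div 2. real (dbar n k) * x ^ k * (1 + x) ^ (n - k))
     \<and> RD n x = (\<Sum>k=1..(n + 2) div 2. real (dhat n k + dbar n k) * x ^ k * (1 + x) ^ (n - k))"
proof -
  define SP where "SP = signed_perms n"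
  define ev where "ev = (\<lambda>p::int list. even (card (Negs p)))"
  define c where "c = (\<lambda>k::nat. x ^ k * (1 + x) ^ (n - k))"
  define L where "L = (\<lambda>p::int list. lf (0 # p))"
  have finSP: "finite SP" unfolding SP_def by (rule SP_finite)
  have spf: "length p = n \<and> distinct (0 # p) \<and> p \<noteq> [] \<and> hd p \<noteq> 0" if "p \<in> SP" for p
  proof -
    have f: "length p = n" "distinct p" "0 \<notin> set p" using SP_facts that SP_def by auto
    then have "p \<noteq> []" using assms by auto
    then show ?thesis using f hd_in_set by fastforce
  qed
  have Lk: "L p \<in> {1..(n + 2) div 2}" if "p \<in> SP" for p
    using lf_bounds[of "0 # p"] spf[OF that] unfolding L_def by auto
  have TL: "leaf (T_of p) = L p" if "p \<in> SP" for p
    using T_of_mk spf[OF that] unfolding L_def lf_def by simp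
  define Fneg where "Fneg = (\<lambda>p. if ev p \<and> hd p < 0 then x ^ (1 + tp (0 # p)) else 0)"
  define Fpos where "Fpos = (\<lambda>p. if ev p \<and> hd p > 0 then x ^ (1 + tp (0 # p)) else 0)"
  define Gneg where "Gneg = (\<lambda>p. if ev p \<and> hd p < 0 \<and> tp (0 # p) + 1 = n then c (L p) else 0)"
  define Gpos where "Gpos = (\<lambda>p. if ev p \<and> hd p > 0 \<and> tp (0 # p) + 1 = n then c (L p) else 0)"
  have eqneg: "(\<Sum>p\<in>SP. Fneg p) = (\<Sum>p\<in>SP. Gneg p)"
    unfolding SP_def grp[of _ n] Fneg_def Gneg_def ev_def c_def L_def
    by (rule sum.cong[OF refl]) (rule per_C(1)[OF _ assms])
  have eqpos: "(\<Sum>p\<in>SP. Fpos p) = (\<Sum>p\<in>SP. Gpos p)"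
    unfolding SP_def grp[of _ n] Fpos_def Gpos_def ev_def c_def L_def
    by (rule sum.cong[OF refl]) (rule per_C(2)[OF _ assms])
  have RDneg: "RD_neg n x = (\<Sum>p\<in>SP. Fneg p)"
  proof -
    have e: "{p \<in> typeD_perms n. hd p < 0} = {p \<in> SP. ev p \<and> hd p < 0}"
      unfolding typeD_perms_def SP_def ev_def by auto
    show ?thesis unfolding RD_neg_def Fneg_def e sum.inter_filter[OF finSP] runB_tp ..
  qed
  have RDall: "RD n x = (\<Sum>p\<in>SP. Fneg p) + (\<Sum>p\<in>SP. Fpos p)"
  proof -
    have e: "typeD_perms n = {p \<in> SP. ev p}" unfolding typeD_perms_def SP_def ev_def by auto
    have "RD n x = (\<Sum>p\<in>SP. if ev p then x ^ (1 + tp (0 # p)) else 0)"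
      unfolding RD_def e sum.inter_filter[OF finSP] runB_tp ..
    also have "\<dots> = (\<Sum>p\<in>SP. Fneg p + Fpos p)"
    proof (rule sum.cong[OF refl])
      fix p assume "p \<in> SP"
      then have "hd p \<noteq> 0" using spf by blast
      then show "(if ev p then x ^ (1 + tp (0 # p)) else 0) = Fneg p + Fpos p"
        unfolding Fneg_def Fpos_def by auto
    qed
    finally show ?thesis by (simp add: sum.distrib)
  qed
  have dbarS: "(\<Sum>k=1..(n + 2) div 2. real (dbar n k) * x ^ k * (1 + x) ^ (n - k)) = (\<Sum>p\<in>SP. Gneg p)"
  proof -
    define B where "B = {p \<in> SP. ev p \<and> hd p < 0 \<and> tp (0 # p) + 1 = n}"
    have finB: "finite B" using finSP B_def by simp
    have db: "dbar n k = card {p \<in> B. L p = k}" for k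
    proof -
      have "{p \<in> snakes_bar n. leaf (T_of p) = k \<and> even (card (Negs p))} = {p \<in> B. L p = k}"
        unfolding B_def using snakes_bar_char[OF assms] TL SP_def ev_def by auto
      then show ?thesis unfolding dbar_def by simp
    qed
    have "(\<Sum>k=1..(n + 2) div 2. real (dbar n k) * x ^ k * (1 + x) ^ (n - k))
        = (\<Sum>k\<in>{1..(n + 2) div 2}. real (card {p \<in> B. L p = k}) * c k)"
      unfolding db c_def by (simp add: mult.assoc)
    also have "\<dots> = (\<Sum>p\<in>B. c (L p))"
      by (rule sum_k[OF finB]) (use Lk B_def in auto)
    also have "\<dots> = (\<Sum>p\<in>SP. Gneg p)"
      unfolding B_def Gneg_def by (simp add: sum.inter_filter[OF finSP])
    finally show ?thesis .
  qed
  have dhatS: "(\<Sum>k=1..(n + 2) div 2. real (dhat n k) * x ^ k * (1 + x) ^ (n - k)) = (\<Sum>p\<in>SP. Gpos p)"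
  proof -
    define B where "B = {p \<in> SP. ev p \<and> hd p > 0 \<and> tp (0 # p) + 1 = n}"
    have finB: "finite B" using finSP B_def by simp
    have db: "dhat n k = card {p \<in> B. L p = k}" for k
    proof -
      have "{p \<in> snakes n. leaf (T_of p) = k \<and> even (card (Negs p))} = {p \<in> B. L p = k}"
        unfolding B_def using snakes_char[OF assms] TL SP_def ev_def by auto
      then show ?thesis unfolding dhat_def by simp
    qed
    have "(\<Sum>k=1..(n + 2) div 2. real (dhat n k) * x ^ k * (1 + x) ^ (n - k))
        = (\<Sum>k\<in>{1..(n + 2) div 2}. real (card {p \<in> B. L p = k}) * c k)"
      unfolding db c_def by (simp add: mult.assoc)
    also have "\<dots> = (\<Sum>p\<in>B. c (L p))"
      by (rule sum_k[OF finB]) (use Lk B_def in auto)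
    also have "\<dots> = (\<Sum>p\<in>SP. Gpos p)"
      unfolding B_def Gpos_def by (simp add: sum.inter_filter[OF finSP])
    finally show ?thesis .
  qed
  have split: "(\<Sum>k=1..(n + 2) div 2. real (dhat n k + dbar n k) * x ^ k * (1 + x) ^ (n - k))
      = (\<Sum>k=1..(n + 2) div 2. real (dhat n k) * x ^ k * (1 + x) ^ (n - k))
      + (\<Sum>k=1..(n + 2) div 2. real (dbar n k) * x ^ k * (1 + x) ^ (n - k))"
    by (simp add: sum.distrib[symmetric] algebra_simps)
  show ?thesis
    using RDneg RDall eqneg eqpos dbarS dhatS split by simp
qed


end
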